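(* Let $(u,K)$ be a Griffith almost-minimizer in $\Omega$ with gauge $h$. There exists a universal constant $\varepsilon_{\rm van}>0$ such that for all $x_0\in K$ and $r_0>0$ with $B(x_0,r_0)\subset\Omega$, the condition $$\beta_K(x,r)+\eta_K(x,r)\le\varepsilon_{\rm van}\quad\text{for all }x\in K\cap B(x_0,r_0/2)\text{ and }0<r\le r_0/2$$ implies $m_K(x,r)=\eta_K(x,r)=0$ for all $x\in K\cap B(x_0,r_0/20)$ and $0<r\le r_0/20$ (with $m_K(x,r)$ computed with respect to any minimal separating extension of $K$ in $B(x,r)$).
   Context: Let $\Omega\subset\mathbb{R}^2$ be open and fix a linear map $\mathbb{C}:\mathbb{R}^{2\times2}\to\mathbb{R}^{2\times2}_{\rm sym}$ with $\mathbb{C}(\xi-\xi^T)=0$ and $\mathbb{C}\xi:\xi\ge c_0|\xi+\xi^T|^2$ for all $\xi$, some $c_0>0$. $e(u)=(\nabla u+\nabla u^T)/2$; $B(x,r)$ open ball. Admissible pair: $K\subset\Omega$ relatively closed, $u\in W^{1,2}_{\rm loc}(\Omega\setminus K;\mathbb{R}^2)$. For $\overline{B(x,r)}\subset\Omega$, a competitor in $B(x,r)$ is an admissible $(v,L)$ with $L\setminus B(x,r)=K\setminus B(x,r)$, $v=u$ a.e. in $\Omega\setminus(K\cup B(x,r))$. Gauge: non-decreasing $h:(0,\infty)\to[0,\infty]$, $h(0^+)=0$. Coral: $\mathcal{H}^1(K\cap B(x,r))>0$ for $x\in K$, $r>0$. A Griffith almost-minimizer with gauge $h$ is an admissible coral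 pair of locally finite energy with $\int_{B(x,r)\setminus K}\mathbb{C}e(u):e(u)+\mathcal{H}^1(K\cap B(x,r))\le\int_{B(x,r)\setminus L}\mathbb{C}e(v):e(v)+\mathcal{H}^1(L\cap B(x,r))+h(r)r$ for all $\overline{B(x,r)}\subset\Omega$ and competitors $(v,L)$. Flatness: for $F\ni x_0$, $\beta_F(x_0,r_0)=r_0^{-1}\inf_\ell\sup_{y\in F\cap B(x_0,r_0)}\mathrm{dist}(y,\ell)$ over lines through $x_0$; $\nu(x_0,r_0)$ unit normal of a minimizing line, $D^\pm_t(x_0,r_0)=\{x\in B(x_0,r_0):\pm(x-x_0)\cdot\nu>t\}$. $F$ separates $B(x_0,r_0)$ if $\beta:=\beta_F(x_0,r_0)\le1/2$ and $D^\pm_{\beta r_0}$ lie in distinct connected components of $B(x_0,r_0)\setminus F$. Holes: for $x_0\in K$, $B(x_0,r_0)\subset\Omega$, $\beta_K(x_0,r_0)\le1/2$, a separating extension is a relatively closed coral $E\subset B(x_0,r_0)$ with $K\cap B(x_0,r_0)\subset E$, $\beta_E(x_0,r_0)=\beta_K(x_0,r_0)$, $E$ separating $B(x_0,r_0)$; $\eta_K(x_0,r_0)=r_0^{-1}\min\mathcal{H}^1(E\setminus K)$ over such $E$ (a minimizer is a minimal separating extension). Bad mass: $\tau=10^{-10}$, $M=10^6$. Given a minimal separating extension $E$ in $B(x_0,r_0)$: for $x\in K\cap B(x_0,9r_0/10)$, $t\in(0,r_0/10)$, $B(x,t)$ is good if $\beta_K(x,t)\le\tau$ and $t^{-1}\mathcal{H}^1((E\cap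 B(x,t))\setminus K)\le\tau$; $\sigma(x)=\inf\{r>0:B(x,t)\text{ good }\forall t\in[r,r_0/10]\}$; $R(x_0,r_0)=B(x_0,r_0)\cap\bigcup\{B(x,M\sigma(x)):x\in K\cap B(x_0,9r_0/10),\sigma(x)>0\}$; $m_K(x_0,r_0)=r_0^{-1}\mathcal{H}^1(K\cap R(x_0,r_0))$. *)

theory Defs
  imports "HOL-Analysis.Analysis"
begin

type_synonym pt = "real^2"
type_synonym mat = "real^2^2"

section \<open>One-dimensional Hausdorff measure (outer measure), normalised so that H1 = length\<close>

definition H1 :: "'a::metric_space set \<Rightarrow> ennreal" where
  "H1 A = (SUP \<delta>\<in>{0<..}.
      INF C\<in>{C :: nat \<Rightarrow> 'a set. A \<subseteq> (\<Union>n. C n) \<and> (\<forall>n. bounded (C n) \<and> diameter (C n) \<le> \<delta>)}.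
        (\<Sum>n. ennreal (diameter (C n))))"

definition elastic :: "(mat \<Rightarrow> mat) \<Rightarrow> bool" where
  "elastic C \<longleftrightarrow> linear C \<and> (\<forall>\<xi>. transpose (C \<xi>) = C \<xi>) \<and> (\<forall>\<xi>. C (\<xi> - transpose \<xi>) = 0)
     \<and> (\<exists>c0>0. \<forall>\<xi>. C \<xi> \<bullet> \<xi> \<ge> c0 * (norm (\<xi> + transpose \<xi>))\<^sup>2)"

section \<open>Local Sobolev space W^{1,2}_loc with weak gradients (G x $ i $ j = d_j u_i)\<close>

definition loc_L2 :: "pt set \<Rightarrow> (pt \<Rightarrow> 'b::euclidean_space) \<Rightarrow> bool" where
  "loc_L2 U f \<longleftrightarrow> set_borel_measurable lebesgue U f \<and>
     (\<forall>S. compact S \<and> S \<subseteq> U \<longrightarrow> set_integrable lebesgue S (\<lambda>x. (norm (f x))\<^sup>2))"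

definition test_fun :: "pt set \<Rightarrow> (pt \<Rightarrow> real) \<Rightarrow> (pt \<Rightarrow> pt) \<Rightarrow> bool" where
  "test_fun U \<phi> d\<phi> \<longleftrightarrow> (\<forall>x. (\<phi> has_derivative (\<lambda>h. d\<phi> x \<bullet> h)) (at x)) \<and> continuous_on UNIV d\<phi>
     \<and> compact (closure {x. \<phi> x \<noteq> 0}) \<and> closure {x. \<phi> x \<noteq> 0} \<subseteq> U"

definition W12loc_grad :: "pt set \<Rightarrow> (pt \<Rightarrow> pt) \<Rightarrow> (pt \<Rightarrow> mat) \<Rightarrow> bool" where
  "W12loc_grad U u G \<longleftrightarrow> loc_L2 U u \<and> loc_L2 U G \<and>
     (\<forall>\<phi> d\<phi> i j. test_fun U \<phi> d\<phi> \<longrightarrow>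
        (LINT x:U|lebesgue. u x $ i * d\<phi> x $ j) = - (LINT x:U|lebesgue. G x $ i $ j * \<phi> x))"

definition W12loc :: "pt set \<Rightarrow> (pt \<Rightarrow> pt) \<Rightarrow> bool" where
  "W12loc U u \<longleftrightarrow> (\<exists>G. W12loc_grad U u G)"

definition wgrad :: "pt set \<Rightarrow> (pt \<Rightarrow> pt) \<Rightarrow> pt \<Rightarrow> mat" where
  "wgrad U u = (SOME G. W12loc_grad U u G)"

definition symgrad :: "pt set \<Rightarrow> (pt \<Rightarrow> pt) \<Rightarrow> pt \<Rightarrow> mat" where
  "symgrad U u x = (1/2) *\<^sub>R (wgrad U u x + transpose (wgrad U u x))"

definition energy :: "(mat \<Rightarrow> mat) \<Rightarrow> pt set \<Rightarrow> (pt \<Rightarrow> pt) \<Rightarrow> pt set \<Rightarrow> pt set \<Rightarrow> ennreal" where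
  "energy C \<Omega> u K B =
     (\<integral>\<^sup>+ x. ennreal (C (symgrad (\<Omega> - K) u x) \<bullet> symgrad (\<Omega> - K) u x) * indicator (B - K) x \<partial>lebesgue)
     + H1 (K \<inter> B)"

definition admissible :: "pt set \<Rightarrow> (pt \<Rightarrow> pt) \<Rightarrow> pt set \<Rightarrow> bool" where
  "admissible \<Omega> u K \<longleftrightarrow> K \<subseteq> \<Omega> \<and> closedin (top_of_set \<Omega>) K \<and> W12loc (\<Omega> - K) u"

definition competitor :: "pt set \<Rightarrow> (pt \<Rightarrow> pt) \<Rightarrow> pt set \<Rightarrow> pt \<Rightarrow> real \<Rightarrow> (pt \<Rightarrow> pt) \<Rightarrow> pt set \<Rightarrow> bool" where
  "competitor \<Omega> u K x r v L \<longleftrightarrow> admissible \<Omega> v L \<and> L - ball x r = K - ball x r \<and>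
     (AE y in lebesgue. y \<in> \<Omega> - (K \<union> ball x r) \<longrightarrow> v y = u y)"

definition coral :: "'a::metric_space set \<Rightarrow> bool" where
  "coral K \<longleftrightarrow> (\<forall>x\<in>K. \<forall>r>0. H1 (K \<inter> ball x r) > 0)"

definition gauge_fn :: "(real \<Rightarrow> ennreal) \<Rightarrow> bool" where
  "gauge_fn h \<longleftrightarrow> mono_on {0<..} h \<and> (h \<longlongrightarrow> 0) (at_right 0)"

definition griffith_amin :: "(mat \<Rightarrow> mat) \<Rightarrow> pt set \<Rightarrow> (real \<Rightarrow> ennreal) \<Rightarrow> (pt \<Rightarrow> pt) \<Rightarrow> pt set \<Rightarrow> bool" where
  "griffith_amin C \<Omega> h u K \<longleftrightarrow> admissible \<Omega> u K \<and> coral K \<and>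
     (\<forall>x r. r > 0 \<and> cball x r \<subseteq> \<Omega> \<longrightarrow> energy C \<Omega> u K (ball x r) < \<infinity>) \<and>
     (\<forall>x r v L. r > 0 \<and> cball x r \<subseteq> \<Omega> \<and> competitor \<Omega> u K x r v L \<longrightarrow>
        energy C \<Omega> u K (ball x r) \<le> energy C \<Omega> v L (ball x r) + h r * ennreal r)"

definition flat_dev :: "pt set \<Rightarrow> pt \<Rightarrow> real \<Rightarrow> pt \<Rightarrow> real" where
  "flat_dev F x0 r0 \<nu> = Sup (insert 0 ((\<lambda>y. infdist y {x. (x - x0) \<bullet> \<nu> = 0}) ` (F \<inter> ball x0 r0)))"

definition beta :: "pt set \<Rightarrow> pt \<Rightarrow> real \<Rightarrow> real" where
  "beta F x0 r0 = (INF \<nu>\<in>sphere 0 1. flat_dev F x0 r0 \<nu>) / r0"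

definition min_normal :: "pt set \<Rightarrow> pt \<Rightarrow> real \<Rightarrow> pt \<Rightarrow> bool" where
  "min_normal F x0 r0 \<nu> \<longleftrightarrow> norm \<nu> = 1 \<and> flat_dev F x0 r0 \<nu> / r0 = beta F x0 r0"

definition Dplus :: "pt \<Rightarrow> real \<Rightarrow> pt \<Rightarrow> real \<Rightarrow> pt set" where
  "Dplus x0 r0 \<nu> t = {x \<in> ball x0 r0. (x - x0) \<bullet> \<nu> > t}"

definition Dminus :: "pt \<Rightarrow> real \<Rightarrow> pt \<Rightarrow> real \<Rightarrow> pt set" where
  "Dminus x0 r0 \<nu> t = {x \<in> ball x0 r0. - ((x - x0) \<bullet> \<nu>) > t}"

definition separates :: "pt set \<Rightarrow> pt \<Rightarrow> real \<Rightarrow> bool" where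
  "separates F x0 r0 \<longleftrightarrow> beta F x0 r0 \<le> 1/2 \<and>
     (\<exists>\<nu>. min_normal F x0 r0 \<nu> \<and>
        (\<exists>C1 C2. C1 \<in> components (ball x0 r0 - F) \<and> C2 \<in> components (ball x0 r0 - F) \<and> C1 \<noteq> C2 \<and>
           Dplus x0 r0 \<nu> (beta F x0 r0 * r0) \<subseteq> C1 \<and> Dminus x0 r0 \<nu> (beta F x0 r0 * r0) \<subseteq> C2))"

definition sep_ext :: "pt set \<Rightarrow> pt \<Rightarrow> real \<Rightarrow> pt set \<Rightarrow> bool" where
  "sep_ext K x0 r0 E \<longleftrightarrow> E \<subseteq> ball x0 r0 \<and> closedin (top_of_set (ball x0 r0)) E \<and> coral E \<and>
     K \<inter> ball x0 r0 \<subseteq> E \<and> beta E x0 r0 = beta K x0 r0 \<and> separates E x0 r0"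

definition eta :: "pt set \<Rightarrow> pt \<Rightarrow> real \<Rightarrow> ennreal" where
  "eta K x0 r0 = (INF E\<in>{E. sep_ext K x0 r0 E}. H1 (E - K)) / ennreal r0"

definition min_sep_ext :: "pt set \<Rightarrow> pt \<Rightarrow> real \<Rightarrow> pt set \<Rightarrow> bool" where
  "min_sep_ext K x0 r0 E \<longleftrightarrow> sep_ext K x0 r0 E \<and>
     H1 (E - K) = (INF E'\<in>{E'. sep_ext K x0 r0 E'}. H1 (E' - K))"

definition tau :: real where "tau = 10 powr (-10)"
definition Mbig :: real where "Mbig = 10^6"

definition good_ball :: "pt set \<Rightarrow> pt set \<Rightarrow> pt \<Rightarrow> real \<Rightarrow> bool" where
  "good_ball K E x t \<longleftrightarrow> beta K x t \<le> tau \<and> H1 ((E \<inter> ball x t) - K) / ennreal t \<le> ennreal tau"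

definition sigma :: "pt set \<Rightarrow> pt set \<Rightarrow> real \<Rightarrow> pt \<Rightarrow> real" where
  "sigma K E r0 x = Inf {r. r > 0 \<and> (\<forall>t\<in>{r..r0/10}. good_ball K E x t)}"

definition badR :: "pt set \<Rightarrow> pt set \<Rightarrow> pt \<Rightarrow> real \<Rightarrow> pt set" where
  "badR K E x0 r0 = ball x0 r0 \<inter>
     \<Union>{ball x (Mbig * sigma K E r0 x) | x. x \<in> K \<inter> ball x0 (9/10 * r0) \<and> sigma K E r0 x > 0}"

definition mK :: "pt set \<Rightarrow> pt set \<Rightarrow> pt \<Rightarrow> real \<Rightarrow> ennreal" where
  "mK K E x0 r0 = H1 (K \<inter> badR K E x0 r0) / ennreal r0"

end

theory Submission
  imports Defs
begin

definition rot :: "pt \<Rightarrow> pt" where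
  "rot v = (\<chi> i. if i = 1 then v$2 else - v$1)"

lemma inner2: "(a::pt) \<bullet> b = a$1*b$1 + a$2*b$2"
  by (simp add: inner_vec_def sum_2)

lemma rot_comp [simp]: "rot v $ 1 = v$2" "rot v $ 2 = - v$1"
  by (simp_all add: rot_def)

lemma norm1_comp: "norm (v::pt) = 1 \<Longrightarrow> v$1 * v$1 + v$2 * v$2 = 1"
  by (metis inner2 norm_eq_1)

lemma rot_norm: "norm v = 1 \<Longrightarrow> norm (rot v) = 1"
  by (simp add: norm_eq_1 inner2 norm1_comp add.commute)

lemma rot_orth: "rot v \<bullet> v = 0" "v \<bullet> rot v = 0"
  by (simp_all add: inner2)

lemma rot_neg: "rot (- v) = - rot v"
  by (simp add: rot_def vec_eq_iff)

lemma decomp: assumes "norm v = 1" shows "w = (w \<bullet> rot v) *\<^sub>R rot v + (w \<bullet> v) *\<^sub>R v"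
proof -
  have h: "v$1 * v$1 + v$2 * v$2 = 1" using norm1_comp[OF assms] .
  have 1: "w$1 = (w$1 * v$2 - w$2 * v$1) * v$2 + (w$1 * v$1 + w$2 * v$2) * v$1"
    using h by algebra
  have 2: "w$2 = (w$1 * v$2 - w$2 * v$1) * (- v$1) + (w$1 * v$1 + w$2 * v$2) * v$2"
    using h by algebra
  show ?thesis unfolding vec_eq_iff forall_2 using 1 2
    by (simp add: inner2)
qed

lemma norm_comb2: assumes "norm v = 1" shows "(norm (a *\<^sub>R rot v + b *\<^sub>R v))\<^sup>2 = a\<^sup>2 + b\<^sup>2"
proof -
  have e: "rot v \<bullet> rot v = 1" "v \<bullet> v = 1" using rot_norm[OF assms] assms by (simp_all add: norm_eq_1)
  show ?thesis unfolding power2_norm_eq_inner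
    by (simp add: inner_add_left inner_add_right e rot_orth power2_eq_square)
qed

lemma norm_comb_le: assumes "norm v = 1" shows "norm (a *\<^sub>R rot v + b *\<^sub>R v) \<le> \<bar>a\<bar> + \<bar>b\<bar>"
proof -
  have "norm (a *\<^sub>R rot v + b *\<^sub>R v) \<le> norm (a *\<^sub>R rot v) + norm (b *\<^sub>R v)" by (rule norm_triangle_ineq)
  also have "\<dots> = \<bar>a\<bar> + \<bar>b\<bar>" using rot_norm[OF assms] assms by simp
  finally show ?thesis .
qed

lemma inner_comb: assumes "norm v = 1"
  shows "(a *\<^sub>R rot v + b *\<^sub>R v) \<bullet> rot v = a" "(a *\<^sub>R rot v + b *\<^sub>R v) \<bullet> v = b"
proof -
  have e: "rot v \<bullet> rot v = 1" "v \<bullet> v = 1" using rot_norm[OF assms] assms by (simp_all add: norm_eq_1)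
  show "(a *\<^sub>R rot v + b *\<^sub>R v) \<bullet> rot v = a" "(a *\<^sub>R rot v + b *\<^sub>R v) \<bullet> v = b"
    by (simp_all add: inner_add_left e rot_orth)
qed

lemma H1_mono: assumes "A \<subseteq> B" shows "H1 A \<le> H1 B"
  unfolding H1_def
proof (rule SUP_mono)
  fix n :: real assume "n \<in> {0<..}"
  then show "\<exists>m\<in>{0<..}. (INF C\<in>{C :: nat \<Rightarrow> 'a set. A \<subseteq> (\<Union>n. C n) \<and> (\<forall>k. bounded (C k) \<and> diameter (C k) \<le> n)}.
        (\<Sum>n. ennreal (diameter (C n)))) \<le> (INF C\<in>{C :: nat \<Rightarrow> 'a set. B \<subseteq> (\<Union>n. C n) \<and> (\<forall>k. bounded (C k) \<and> diameter (C k) \<le> m)}.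
        (\<Sum>n. ennreal (diameter (C n))))"
    by (intro bexI[of _ n] INF_superset_mono) (use assms in auto)
qed

lemma H1_empty [simp]: "H1 {} = 0"
proof -
  have "\<And>d. d > 0 \<Longrightarrow> (INF C\<in>{C :: nat \<Rightarrow> 'a set. {} \<subseteq> (\<Union>n. C n) \<and> (\<forall>k. bounded (C k) \<and> diameter (C k) \<le> d)}.
        (\<Sum>n. ennreal (diameter (C n)))) = 0"
  proof -
    fix d :: real assume "d > 0"
    have "(INF C\<in>{C :: nat \<Rightarrow> 'a set. {} \<subseteq> (\<Union>n. C n) \<and> (\<forall>k. bounded (C k) \<and> diameter (C k) \<le> d)}.
        (\<Sum>n. ennreal (diameter (C n)))) \<le> (\<Sum>n. ennreal (diameter ((\<lambda>_. {}) n :: 'a set)))"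
      by (rule INF_lower) (use \<open>d > 0\<close> in auto)
    then show "?thesis d" by simp
  qed
  then show ?thesis unfolding H1_def by simp
qed

lemma H1_proj:
  fixes A :: "pt set"
  assumes e: "norm e = 1" and sub: "{a..b} \<subseteq> (\<lambda>w. (w - y) \<bullet> e) ` A"
  shows "ennreal ((b - a) / 2) \<le> H1 A"
proof -
  let ?p = "\<lambda>w. (w - y) \<bullet> e"
  have key: "ennreal ((b - a) / 2) \<le> (\<Sum>n. ennreal (diameter (C n)))"
    if C: "A \<subseteq> (\<Union>n. C n)" "\<forall>k. bounded (C k) \<and> diameter (C k) \<le> 1" for C :: "nat \<Rightarrow> pt set"
  proof -
    define c where "c n = (SOME c. c \<in> C n)" for n
    define I where "I n = {?p (c n) - diameter (C n) .. ?p (c n) + diameter (C n)}" for n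
    have cov: "{a..b} \<subseteq> (\<Union>n. I n)"
    proof
      fix t assume "t \<in> {a..b}"
      then obtain w where w: "w \<in> A" "t = ?p w" using sub by auto
      then obtain n where n: "w \<in> C n" using C by auto
      then have cn: "c n \<in> C n" unfolding c_def by (metis someI_ex)
      have "\<bar>?p w - ?p (c n)\<bar> = \<bar>(w - c n) \<bullet> e\<bar>" by (simp add: inner_diff_left)
      also have "\<dots> \<le> norm (w - c n)" using Cauchy_Schwarz_ineq2[of "w - c n" e] e by simp
      also have "\<dots> \<le> diameter (C n)" using diameter_bounded_bound[of "C n" w "c n"] C(2) n cn
        by (simp add: dist_norm)
      finally have "t \<in> I n" unfolding I_def using w by (auto simp: abs_le_iff)
      then show "t \<in> (\<Union>n. I n)" by blast
    qed
    have "ennreal (b - a) \<le> emeasure lborel {a..b}"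
      by (simp add: emeasure_lborel_Icc_eq)
    also have "\<dots> \<le> emeasure lborel (\<Union>n. I n)" by (rule emeasure_mono[OF cov]) (simp add: I_def)
    also have "\<dots> \<le> (\<Sum>n. emeasure lborel (I n))" by (rule emeasure_subadditive_countably) (auto simp: I_def)
    also have "\<dots> = (\<Sum>n. 2 * ennreal (diameter (C n)))"
    proof -
      have "emeasure lborel (I n) = 2 * ennreal (diameter (C n))" for n
        using diameter_ge_0[of "C n"] C(2) unfolding I_def
        by (simp add: emeasure_lborel_Icc_eq ennreal_mult)
      then show ?thesis by simp
    qed
    also have "\<dots> = 2 * (\<Sum>n. ennreal (diameter (C n)))" by simp
    finally have fin: "ennreal (b - a) \<le> 2 * (\<Sum>n. ennreal (diameter (C n)))" .
    have "ennreal (b - a) = 2 * ennreal ((b - a) / 2)"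
    proof (cases "a \<le> b")
      case True
      have "(2::real) * ((b - a) / 2) = b - a" by simp
      moreover have "ennreal (2 * ((b - a) / 2)) = ennreal 2 * ennreal ((b - a) / 2)"
        by (rule ennreal_mult) (use True in auto)
      ultimately show ?thesis by (metis ennreal_numeral)
    next
      case False then show ?thesis by (simp add: ennreal_neg)
    qed
    with fin have "2 * ennreal ((b - a) / 2) \<le> 2 * (\<Sum>n. ennreal (diameter (C n)))" by simp
    then show ?thesis by (subst (asm) ennreal_mult_le_mult_iff) auto
  qed
  have "ennreal ((b - a) / 2) \<le> (INF C\<in>{C :: nat \<Rightarrow> pt set. A \<subseteq> (\<Union>n. C n) \<and> (\<forall>k. bounded (C k) \<and> diameter (C k) \<le> 1)}.
        (\<Sum>n. ennreal (diameter (C n))))"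
    by (rule INF_greatest) (use key in auto)
  also have "\<dots> \<le> H1 A" unfolding H1_def by (rule SUP_upper) auto
  finally show ?thesis .
qed

lemma infdist_line: assumes "norm \<nu> = 1"
  shows "\<bar>(z - y) \<bullet> \<nu>\<bar> \<le> infdist z {w. (w - y) \<bullet> \<nu> = 0}"
proof -
  have ne: "{w. (w - y) \<bullet> \<nu> = 0} \<noteq> {}" by (metis (mono_tags) diff_self inner_zero_left empty_Collect_eq)
  have "\<bar>(z - y) \<bullet> \<nu>\<bar> \<le> dist z w" if "(w - y) \<bullet> \<nu> = 0" for w
  proof -
    have "(z - y) \<bullet> \<nu> = (z - w) \<bullet> \<nu>" using that by (simp add: inner_diff_left)
    also have "\<bar>\<dots>\<bar> \<le> norm (z - w)" using Cauchy_Schwarz_ineq2[of "z - w" \<nu>] assms by simp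
    finally show ?thesis by (simp add: dist_norm)
  qed
  then show ?thesis unfolding infdist_notempty[OF ne] by (intro cINF_greatest[OF ne]) auto
qed

lemma infdist_line_le: "infdist z {w. (w - y) \<bullet> \<nu> = 0} \<le> dist z y"
  by (rule infdist_le) simp

lemma fd_bdd: "bdd_above (insert 0 ((\<lambda>z. infdist z {w. (w - y) \<bullet> \<nu> = 0}) ` (F \<inter> ball y s)))"
proof -
  have "\<forall>a\<in>insert 0 ((\<lambda>z. infdist z {w. (w - y) \<bullet> \<nu> = 0}) ` (F \<inter> ball y s)). a \<le> max 0 s"
  proof
    fix a assume "a \<in> insert 0 ((\<lambda>z. infdist z {w. (w - y) \<bullet> \<nu> = 0}) ` (F \<inter> ball y s))"
    then consider "a = 0" | z where "z \<in> F \<inter> ball y s" "a = infdist z {w. (w - y) \<bullet> \<nu> = 0}" by blast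
    then show "a \<le> max 0 s"
    proof cases
      case 2
      then have "a \<le> dist z y" using infdist_line_le by simp
      also have "\<dots> < s" using 2 by (simp add: dist_commute)
      finally show ?thesis by simp
    qed simp
  qed
  then show ?thesis by (meson bdd_aboveI)
qed

lemma fd_nonneg: "0 \<le> flat_dev F y s \<nu>"
  unfolding flat_dev_def by (rule cSup_upper[OF _ fd_bdd]) simp

lemma fd_upper: "z \<in> F \<inter> ball y s \<Longrightarrow> infdist z {w. (w - y) \<bullet> \<nu> = 0} \<le> flat_dev F y s \<nu>"
  unfolding flat_dev_def by (rule cSup_upper[OF _ fd_bdd]) simp

lemma fd_mono: "F \<inter> ball y s \<subseteq> G \<inter> ball y s \<Longrightarrow> flat_dev F y s \<nu> \<le> flat_dev G y s \<nu>"
  unfolding flat_dev_def by (rule cSup_subset_mono[OF _ fd_bdd]) auto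

lemma fd_Int: "flat_dev (F \<inter> ball y s) y s \<nu> = flat_dev F y s \<nu>"
  unfolding flat_dev_def by (simp add: Int_assoc)

lemma beta_Int: "beta (F \<inter> ball y s) y s = beta F y s"
proof -
  have "flat_dev (F \<inter> ball y s) y s = flat_dev F y s" by (rule ext) (rule fd_Int)
  then show ?thesis unfolding beta_def by simp
qed

lemma min_normal_Int: "min_normal (F \<inter> ball y s) y s \<nu> = min_normal F y s \<nu>"
  unfolding min_normal_def fd_Int beta_Int ..

lemma beta_le_fd: assumes "s > 0" "norm \<nu> = 1" shows "beta F y s \<le> flat_dev F y s \<nu> / s"
proof -
  have "(INF \<nu>\<in>sphere 0 1. flat_dev F y s \<nu>) \<le> flat_dev F y s \<nu>"
    by (rule cINF_lower) (use fd_nonneg assms in \<open>auto intro!: bdd_belowI2[where m=0]\<close>)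
  then show ?thesis unfolding beta_def using assms by (simp add: divide_right_mono)
qed

lemma beta_nonneg: "s > 0 \<Longrightarrow> 0 \<le> beta F y s"
  unfolding beta_def by (auto intro!: divide_nonneg_pos cINF_greatest simp: fd_nonneg)

lemma height_bound: "norm \<nu> = 1 \<Longrightarrow> z \<in> F \<inter> ball y s \<Longrightarrow> \<bar>(z - y) \<bullet> \<nu>\<bar> \<le> flat_dev F y s \<nu>"
  using infdist_line fd_upper order_trans by blast

lemma norm_lt_s:
  assumes "norm \<nu> = 1" "\<bar>t\<bar> \<le> s/2" "\<bar>h\<bar> \<le> s/2" "s > 0"
  shows "norm (t *\<^sub>R rot \<nu> + h *\<^sub>R \<nu>) < s"
proof -
  have "(norm (t *\<^sub>R rot \<nu> + h *\<^sub>R \<nu>))\<^sup>2 = t\<^sup>2 + h\<^sup>2" by (rule norm_comb2[OF assms(1)])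
  also have "\<dots> \<le> (s/2)\<^sup>2 + (s/2)\<^sup>2"
  proof -
    have "\<bar>t\<bar>\<^sup>2 \<le> (s/2)\<^sup>2" "\<bar>h\<bar>\<^sup>2 \<le> (s/2)\<^sup>2" by (rule power_mono; use assms in auto)+
    then show ?thesis by simp
  qed
  also have "\<dots> < s\<^sup>2" using assms(4) by (simp add: power2_eq_square field_simps)
  finally show ?thesis using assms(4) by (meson power2_less_imp_less less_imp_le)
qed

lemma chord:
  assumes nu: "norm \<nu> = 1" and C: "C1 \<in> components (ball y s - E)" "C2 \<in> components (ball y s - E)" "C1 \<noteq> C2"
    and D: "Dplus y s \<nu> (bt * s) \<subseteq> C1" "Dminus y s \<nu> (bt * s) \<subseteq> C2"
    and b: "bt < 1/2" and t: "\<bar>t\<bar> \<le> s/2" and s: "s > 0"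
  shows "\<exists>h. \<bar>h\<bar> \<le> s/2 \<and> y + t *\<^sub>R rot \<nu> + h *\<^sub>R \<nu> \<in> E"
proof (rule ccontr)
  assume no: "\<not> ?thesis"
  define f where "f h = y + t *\<^sub>R rot \<nu> + h *\<^sub>R \<nu>" for h
  define S where "S = f ` {-s/2..s/2}"
  have conS: "connected S" unfolding S_def f_def
    by (intro connected_continuous_image) (auto intro!: continuous_intros)
  have inball: "f h \<in> ball y s" if "\<bar>h\<bar> \<le> s/2" for h
  proof -
    have "f h - y = t *\<^sub>R rot \<nu> + h *\<^sub>R \<nu>" by (simp add: f_def)
    then have "dist y (f h) = norm (t *\<^sub>R rot \<nu> + h *\<^sub>R \<nu>)" by (metis dist_norm dist_commute)
    then show ?thesis using norm_lt_s[OF nu t that s] by simp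
  qed
  have SS: "S \<subseteq> ball y s - E" unfolding S_def using no inball by (auto simp: f_def abs_le_iff)
  have hf: "(f h - y) \<bullet> \<nu> = h" for h unfolding f_def using inner_comb[OF nu, of t h] by (simp add: algebra_simps)
  have bs: "bt * s < s/2" using mult_strict_right_mono[OF b s] by simp
  have "f (s/2) \<in> ball y s" "f (-s/2) \<in> ball y s" using inball s by auto
  moreover have "(f (s/2) - y) \<bullet> \<nu> > bt * s" "- ((f (-s/2) - y) \<bullet> \<nu>) > bt * s"
    using hf[of "s/2"] hf[of "-s/2"] bs by linarith+
  ultimately have a: "f (s/2) \<in> Dplus y s \<nu> (bt * s)" and bb: "f (-s/2) \<in> Dminus y s \<nu> (bt * s)"
    unfolding Dplus_def Dminus_def by blast+
  have aS: "f (s/2) \<in> S" "f (-s/2) \<in> S" unfolding S_def using s by auto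
  have "S \<subseteq> C1" by (rule components_maximal[OF C(1) conS SS]) (use a aS D in blast)
  then have "f (-s/2) \<in> C1 \<inter> C2" using aS bb D by blast
  then show False using components_eq[OF C(1) C(2)] C(3) by blast
qed

definition hypo :: "pt set \<Rightarrow> pt \<Rightarrow> real \<Rightarrow> real \<Rightarrow> bool" where
  "hypo K x0 r0 \<epsilon> \<longleftrightarrow> (\<forall>x\<in>K \<inter> ball x0 (r0/2). \<forall>r. 0 < r \<and> r \<le> r0/2 \<longrightarrow>
            ennreal (beta K x r) + eta K x r \<le> ennreal \<epsilon>)"

lemma frame:
  assumes hyp: "hypo K x0 r0 \<epsilon>" and y: "y \<in> K" "y \<in> ball x0 (r0/2)" and s: "0 < s" "s \<le> r0/2"
    and eps: "0 < \<epsilon>" "\<epsilon> \<le> 1/100"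
  obtains \<nu> where "norm \<nu> = 1" "min_normal K y s \<nu>" "beta K y s \<le> \<epsilon>"
    "\<forall>z\<in>K \<inter> ball y s. \<bar>(z - y) \<bullet> \<nu>\<bar> \<le> beta K y s * s"
    "\<forall>t0. \<bar>t0\<bar> \<le> s/4 \<longrightarrow> (\<exists>z\<in>K. dist z (y + t0 *\<^sub>R rot \<nu>) \<le> 5 * \<epsilon> * s)"
proof -
  have hb: "ennreal (beta K y s) + eta K y s \<le> ennreal \<epsilon>" using hyp y s unfolding hypo_def by auto
  have "ennreal (beta K y s) \<le> ennreal \<epsilon>" by (rule order_trans[OF _ hb]) (rule add_increasing2; simp)
  then have bK: "beta K y s \<le> \<epsilon>" using eps by simp
  have eta_le: "eta K y s \<le> ennreal \<epsilon>" by (rule order_trans[OF _ hb]) (rule add_increasing; simp)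
  define I where "I = (INF E\<in>{E. sep_ext K y s E}. H1 (E - K))"
  have "I = (I / ennreal s) * ennreal s" using s by (simp add: ennreal_divide_times)
  also have "I / ennreal s = eta K y s" unfolding eta_def I_def ..
  finally have "I \<le> ennreal \<epsilon> * ennreal s" using eta_le by (metis mult_right_mono zero_le)
  also have "\<dots> = ennreal (\<epsilon> * s)" using eps s by (simp add: ennreal_mult)
  also have "\<dots> < ennreal (2 * \<epsilon> * s)" using eps s by (subst ennreal_less_iff) auto
  finally obtain E where E: "sep_ext K y s E" and HE: "H1 (E - K) < ennreal (2 * \<epsilon> * s)"
    unfolding I_def INF_less_iff by blast
  from E have Eb: "E \<subseteq> ball y s" "K \<inter> ball y s \<subseteq> E" "beta E y s = beta K y s" "separates E y s"
    unfolding sep_ext_def by auto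
  from Eb(4) obtain \<nu> C1 C2 where mn: "min_normal E y s \<nu>" and C: "C1 \<in> components (ball y s - E)"
    "C2 \<in> components (ball y s - E)" "C1 \<noteq> C2" and
    D: "Dplus y s \<nu> (beta E y s * s) \<subseteq> C1" "Dminus y s \<nu> (beta E y s * s) \<subseteq> C2"
    unfolding separates_def by blast
  have nu: "norm \<nu> = 1" using mn min_normal_def by blast
  have "flat_dev K y s \<nu> \<le> flat_dev E y s \<nu>" by (rule fd_mono) (use Eb in blast)
  then have "flat_dev K y s \<nu> / s \<le> flat_dev E y s \<nu> / s" by (rule divide_right_mono) (use s in auto)
  then have "flat_dev K y s \<nu> / s \<le> beta K y s" using mn Eb(3) unfolding min_normal_def by simp
  moreover have "beta K y s \<le> flat_dev K y s \<nu> / s" by (rule beta_le_fd[OF s(1) nu])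
  ultimately have fdK: "flat_dev K y s \<nu> / s = beta K y s" by simp
  then have mnK: "min_normal K y s \<nu>" using nu unfolding min_normal_def by simp
  have fdK': "flat_dev K y s \<nu> = beta K y s * s" using fdK s by (simp add: field_simps)
  have hgt: "\<forall>z\<in>K \<inter> ball y s. \<bar>(z - y) \<bullet> \<nu>\<bar> \<le> beta K y s * s"
    using height_bound[OF nu] fdK' by metis
  have bil: "\<exists>z\<in>K. dist z (y + t0 *\<^sub>R rot \<nu>) \<le> 5 * \<epsilon> * s" if t0: "\<bar>t0\<bar> \<le> s/4" for t0
  proof (rule ccontr)
    assume no: "\<not> ?thesis"
    have "{t0 .. t0 + 4 * \<epsilon> * s} \<subseteq> (\<lambda>w. (w - y) \<bullet> rot \<nu>) ` (E - K)"
    proof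
      fix t assume t: "t \<in> {t0 .. t0 + 4 * \<epsilon> * s}"
      have "\<epsilon> * s \<le> (1/100) * s" using eps s by (intro mult_right_mono) auto
      moreover have "t0 \<le> t" "t \<le> t0 + 4 * \<epsilon> * s" "t0 \<le> s/4" "- t0 \<le> s/4" using t t0 by (auto simp: abs_le_iff)
      ultimately have ts: "\<bar>t\<bar> \<le> s/2" unfolding abs_le_iff by linarith
      obtain h where h: "\<bar>h\<bar> \<le> s/2" "y + t *\<^sub>R rot \<nu> + h *\<^sub>R \<nu> \<in> E"
        using chord[OF nu C D _ ts s(1)] Eb(3) bK eps by auto
      define w where "w = y + t *\<^sub>R rot \<nu> + h *\<^sub>R \<nu>"
      have wy: "w - y = t *\<^sub>R rot \<nu> + h *\<^sub>R \<nu>" unfolding w_def by simp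
      have "w \<notin> K"
      proof
        assume wK: "w \<in> K"
        have "w \<in> ball y s" using norm_lt_s[OF nu ts h(1) s(1)] wy by (simp add: dist_norm norm_minus_commute)
        then have "\<bar>(w - y) \<bullet> \<nu>\<bar> \<le> beta K y s * s" using hgt wK by blast
        then have "\<bar>h\<bar> \<le> beta K y s * s" unfolding wy inner_comb[OF nu] .
        also have "\<dots> \<le> \<epsilon> * s" using bK s by simp
        finally have hh: "\<bar>h\<bar> \<le> \<epsilon> * s" .
        have "w - (y + t0 *\<^sub>R rot \<nu>) = (t - t0) *\<^sub>R rot \<nu> + h *\<^sub>R \<nu>" unfolding w_def by (simp add: algebra_simps)
        then have "dist w (y + t0 *\<^sub>R rot \<nu>) \<le> \<bar>t - t0\<bar> + \<bar>h\<bar>" using norm_comb_le[OF nu] by (simp add: dist_norm)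
        also have "\<dots> \<le> 5 * \<epsilon> * s" using t hh by auto
        finally show False using no wK by blast
      qed
      moreover have "(w - y) \<bullet> rot \<nu> = t" using wy inner_comb[OF nu] by simp
      moreover have "w \<in> E" using h(2) w_def by simp
      ultimately show "t \<in> (\<lambda>w. (w - y) \<bullet> rot \<nu>) ` (E - K)" by (intro image_eqI[of _ _ w]) auto
    qed
    from H1_proj[OF rot_norm[OF nu] this] have "ennreal ((t0 + 4 * \<epsilon> * s - t0)/2) \<le> H1 (E - K)" .
    then have "ennreal (2 * \<epsilon> * s) \<le> H1 (E - K)" by (simp add: mult.assoc)
    then show False using HE by simp
  qed
  show ?thesis using that[OF nu mnK bK hgt] bil by blast
qed

lemma midpt:
  assumes hyp: "hypo K x0 r0 \<epsilon>" and p: "p \<in> K" "p \<in> ball x0 (r0/2)" and q: "q \<in> K"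
    and d: "2 * dist p q \<le> r0/2" and eps: "0 < \<epsilon>" "\<epsilon> \<le> 1/100"
  shows "\<exists>z\<in>K. dist z (midpoint p q) \<le> 11 * \<epsilon> * dist p q"
proof (cases "p = q")
  case True then show ?thesis using p by auto
next
  case False
  define l where "l = dist p q"
  have l: "l > 0" using False l_def by simp
  have s1: "0 < 2*l" and s2: "2*l \<le> r0/2" using l d l_def by auto
  obtain \<nu> where nu: "norm \<nu> = 1" and "min_normal K p (2*l) \<nu>" and bK: "beta K p (2*l) \<le> \<epsilon>"
    and hgt: "\<forall>z\<in>K \<inter> ball p (2*l). \<bar>(z - p) \<bullet> \<nu>\<bar> \<le> beta K p (2*l) * (2*l)"
    and bil: "\<forall>t0. \<bar>t0\<bar> \<le> (2*l)/4 \<longrightarrow> (\<exists>z\<in>K. dist z (p + t0 *\<^sub>R rot \<nu>) \<le> 5 * \<epsilon> * (2*l))"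
    by (rule frame[OF hyp p(1) p(2) s1 s2 eps])
  have "q \<in> ball p (2*l)" using l l_def by simp
  then have "\<bar>(q - p) \<bullet> \<nu>\<bar> \<le> beta K p (2*l) * (2*l)" using hgt q by blast
  also have "\<dots> \<le> \<epsilon> * (2*l)" using bK l by (intro mult_right_mono) auto
  finally have hq: "\<bar>(q - p) \<bullet> \<nu>\<bar> \<le> 2 * \<epsilon> * l" by simp
  define m where "m = midpoint p q"
  have mp: "m - p = (1/2) *\<^sub>R (q - p)" unfolding m_def midpoint_def by (simp add: vec_eq_iff field_simps)
  define t0 where "t0 = (m - p) \<bullet> rot \<nu>"
  have "\<bar>t0\<bar> \<le> norm (m - p)" unfolding t0_def using Cauchy_Schwarz_ineq2[of "m - p" "rot \<nu>"] rot_norm[OF nu] by simp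
  also have "\<dots> = l/2" using mp l_def by (simp add: dist_norm norm_minus_commute)
  finally have "\<bar>t0\<bar> \<le> (2*l)/4" by simp
  then obtain z where z: "z \<in> K" "dist z (p + t0 *\<^sub>R rot \<nu>) \<le> 5 * \<epsilon> * (2*l)" using bil by blast
  define hh where "hh = (m - p) \<bullet> \<nu>"
  have eq: "m = p + t0 *\<^sub>R rot \<nu> + hh *\<^sub>R \<nu>"
    using decomp[OF nu, of "m - p"] unfolding t0_def hh_def by (simp add: algebra_simps)
  have "dist (p + t0 *\<^sub>R rot \<nu>) m = norm (hh *\<^sub>R \<nu>)" unfolding eq by (simp add: dist_norm)
  then have "dist (p + t0 *\<^sub>R rot \<nu>) m = \<bar>(m - p) \<bullet> \<nu>\<bar>" using nu by (simp add: hh_def)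
  also have "\<dots> = \<bar>(q - p) \<bullet> \<nu>\<bar> / 2" unfolding mp by simp
  also have "\<dots> \<le> \<epsilon> * l" using hq by simp
  finally have "dist z m \<le> 5 * \<epsilon> * (2*l) + \<epsilon> * l" using z(2) dist_triangle[of z m "p + t0 *\<^sub>R rot \<nu>"] by linarith
  then show ?thesis using z(1) unfolding m_def l_def by (intro bexI[of _ z]) (auto simp: algebra_simps)
qed

fun refine :: "(pt \<Rightarrow> pt \<Rightarrow> pt) \<Rightarrow> pt list \<Rightarrow> pt list" where
  "refine m (p # q # rest) = p # m p q # refine m (q # rest)"
| "refine m l = l"

fun steps :: "real \<Rightarrow> pt list \<Rightarrow> bool" where
  "steps L (p # q # rest) = (dist p q \<le> L \<and> steps L (q # rest))"
| "steps L l = True"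

lemma refine_Cons: "\<exists>t. refine m (q # rest) = q # t"
  by (cases rest) auto

lemma refine_hd: "l \<noteq> [] \<Longrightarrow> hd (refine m l) = hd l"
  by (induction m l rule: refine.induct) auto

lemma refine_last: "l \<noteq> [] \<Longrightarrow> last (refine m l) = last l"
proof (induction m l rule: refine.induct)
  case (1 m p q rest)
  obtain t where t: "refine m (q # rest) = q # t" using refine_Cons by blast
  show ?case using 1 t by simp
qed auto

lemma refine_ne: "l \<noteq> [] \<Longrightarrow> refine m l \<noteq> []"
  by (induction m l rule: refine.induct) auto

lemma dist_midpoint_cball: fixes p :: pt shows "p \<in> cball x \<rho> \<Longrightarrow> q \<in> cball x \<rho> \<Longrightarrow> midpoint p q \<in> cball x \<rho>"
proof -
  assume "p \<in> cball x \<rho>" "q \<in> cball x \<rho>"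
  then have "closed_segment p q \<subseteq> cball x \<rho>" by (intro closed_segment_subset) (auto simp: convex_cball)
  then show ?thesis using midpoint_in_closed_segment[of p q] by blast
qed

lemma refine_props:
  assumes mp: "\<forall>p q. p \<in> K \<inter> cball x \<rho> \<and> q \<in> K \<inter> cball x \<rho> \<and> dist p q \<le> L \<longrightarrow>
                 m p q \<in> K \<and> dist (m p q) (midpoint p q) \<le> c * dist p q"
    and c: "0 \<le> c" and L0: "0 \<le> L"
  shows "set l \<subseteq> K \<inter> cball x \<rho> \<Longrightarrow> steps L l \<Longrightarrow>
         set (refine m l) \<subseteq> K \<inter> cball x (\<rho> + c * L) \<and> steps ((1/2 + c) * L) (refine m l)"
proof (induction l rule: induct_list012)
  case (3 p q rest)
  have pq: "p \<in> K \<inter> cball x \<rho>" "q \<in> K \<inter> cball x \<rho>" "dist p q \<le> L" using 3(3,4) by auto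
  have "m p q \<in> K \<and> dist (m p q) (midpoint p q) \<le> c * dist p q" using mp[rule_format, of p q] pq by simp
  then have mK: "m p q \<in> K" and md: "dist (m p q) (midpoint p q) \<le> c * dist p q" by auto
  have "dist x (midpoint p q) \<le> \<rho>" using dist_midpoint_cball[of p x \<rho> q] pq by auto
  moreover have "c * dist p q \<le> c * L" using c pq(3) by (rule mult_left_mono[rotated])
  ultimately have "dist x (m p q) \<le> \<rho> + c * L" using md dist_triangle[of x "m p q" "midpoint p q"] by (simp add: dist_commute)
  then have mc: "m p q \<in> K \<inter> cball x (\<rho> + c * L)" using mK by simp
  have "\<rho> \<le> \<rho> + c * L" using c L0 by simp
  then have pc: "p \<in> K \<inter> cball x (\<rho> + c * L)" using pq by auto
  have d1: "dist p (m p q) \<le> (1/2 + c) * L"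
  proof -
    have "dist p (midpoint p q) = dist p q / 2" by (simp add: dist_midpoint)
    then have "dist p (m p q) \<le> dist p q / 2 + c * dist p q" using md dist_triangle[of p "m p q" "midpoint p q"] by (simp add: dist_commute)
    also have "\<dots> = (1/2 + c) * dist p q" by (simp add: algebra_simps)
    also have "\<dots> \<le> (1/2 + c) * L" using pq(3) c by (intro mult_left_mono) auto
    finally show ?thesis .
  qed
  have d2: "dist (m p q) q \<le> (1/2 + c) * L"
  proof -
    have "dist (midpoint p q) q = dist p q / 2" by (simp add: dist_midpoint)
    then have "dist (m p q) q \<le> dist p q / 2 + c * dist p q" using md dist_triangle[of "m p q" q "midpoint p q"] by (simp add: dist_commute)
    also have "\<dots> = (1/2 + c) * dist p q" by (simp add: algebra_simps)
    also have "\<dots> \<le> (1/2 + c) * L" using pq(3) c by (intro mult_left_mono) auto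
    finally show ?thesis .
  qed
  have IH: "set (refine m (q # rest)) \<subseteq> K \<inter> cball x (\<rho> + c * L) \<and> steps ((1/2 + c) * L) (refine m (q # rest))"
    using 3 by auto
  obtain t where t: "refine m (q # rest) = q # t" using refine_Cons by blast
  show ?case using IH mc pc d1 d2 t by simp
next
  case 1
  then show ?case by simp
next
  case (2 v)
  have "\<rho> \<le> \<rho> + c * L" using c L0 by simp
  then show ?case using 2 by auto
qed

lemma iter_props:
  fixes m :: "pt \<Rightarrow> pt \<Rightarrow> pt"
  assumes mp: "\<forall>p q. p \<in> K \<inter> cball x R \<and> q \<in> K \<inter> cball x R \<and> dist p q \<le> L0 \<longrightarrow>
                 m p q \<in> K \<and> dist (m p q) (midpoint p q) \<le> c * dist p q"
    and R: "\<rho>0 + 3*c*L0 \<le> R" and c: "0 \<le> c" "c \<le> 1/6" and L0: "0 \<le> L0"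
    and l0: "set l0 \<subseteq> K \<inter> cball x \<rho>0" "steps L0 l0"
  shows "set ((refine m ^^ k) l0) \<subseteq> K \<inter> cball x (\<rho>0 + 3*c*L0*(1 - (1/2+c)^k))
         \<and> steps ((1/2+c)^k * L0) ((refine m ^^ k) l0)"
proof (induction k)
  case 0
  then show ?case using l0 by simp
next
  case (Suc k)
  define \<theta> where "\<theta> = 1/2 + c"
  have th: "0 \<le> \<theta>" "\<theta> \<le> 1" "3 * \<theta> - 2 \<le> 0" using c unfolding \<theta>_def by auto
  have thk: "0 \<le> \<theta>^k" "\<theta>^k \<le> 1" using th by (simp_all add: power_le_one)
  define \<rho>k where "\<rho>k = \<rho>0 + 3*c*L0*(1 - \<theta>^k)"
  define Lk where "Lk = \<theta>^k * L0"
  have Lk: "0 \<le> Lk" "Lk \<le> L0" using thk L0 unfolding Lk_def by (simp, simp add: mult_left_le_one_le)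
  have "3*c*L0*(1 - \<theta>^k) \<le> 3*c*L0" using thk c L0 by (simp add: mult_left_le)
  then have rk: "\<rho>k \<le> R" using R unfolding \<rho>k_def by linarith
  have mp': "\<forall>p q. p \<in> K \<inter> cball x \<rho>k \<and> q \<in> K \<inter> cball x \<rho>k \<and> dist p q \<le> Lk \<longrightarrow>
                 m p q \<in> K \<and> dist (m p q) (midpoint p q) \<le> c * dist p q"
  proof (intro allI impI)
    fix p q assume a: "p \<in> K \<inter> cball x \<rho>k \<and> q \<in> K \<inter> cball x \<rho>k \<and> dist p q \<le> Lk"
    have "cball x \<rho>k \<subseteq> cball x R" using rk by (rule subset_cball)
    then have h1: "p \<in> K \<inter> cball x R" "q \<in> K \<inter> cball x R" using a by auto
    have h2: "dist p q \<le> L0" using a Lk(2) by linarith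
    show "m p q \<in> K \<and> dist (m p q) (midpoint p q) \<le> c * dist p q"
      by (rule mp[rule_format]) (use h1 h2 in blast)
  qed
  have IH: "set ((refine m ^^ k) l0) \<subseteq> K \<inter> cball x \<rho>k" "steps Lk ((refine m ^^ k) l0)"
    using Suc.IH unfolding \<rho>k_def Lk_def \<theta>_def by blast+
  have r: "set (refine m ((refine m ^^ k) l0)) \<subseteq> K \<inter> cball x (\<rho>k + c * Lk) \<and>
        steps ((1/2 + c) * Lk) (refine m ((refine m ^^ k) l0))"
    by (rule refine_props[OF mp' c(1) Lk(1) IH])
  define X where "X = c * L0 * \<theta>^k"
  have X: "0 \<le> X" using c L0 thk unfolding X_def by simp
  have "X * (3 * \<theta> - 2) \<le> 0" using X th(3) by (rule mult_nonneg_nonpos)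
  then have X2: "3 * (X * \<theta>) \<le> 2 * X" by (simp add: algebra_simps)
  have e1: "\<rho>k + c * Lk = \<rho>0 + 3*c*L0 - 2 * X" unfolding \<rho>k_def Lk_def X_def by (simp add: algebra_simps)
  have e2: "\<rho>0 + 3*c*L0*(1 - \<theta>^Suc k) = \<rho>0 + 3*c*L0 - 3 * (X * \<theta>)" unfolding X_def by (simp add: algebra_simps)
  have "\<rho>k + c * Lk \<le> \<rho>0 + 3*c*L0*(1 - \<theta>^Suc k)" using e1 e2 X2 by linarith
  then have "cball x (\<rho>k + c * Lk) \<subseteq> cball x (\<rho>0 + 3*c*L0*(1 - \<theta>^Suc k))" by (rule subset_cball)
  moreover have "(1/2 + c) * Lk = \<theta>^Suc k * L0" unfolding Lk_def \<theta>_def by simp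
  ultimately show ?case using r unfolding \<theta>_def by (simp only: funpow.simps comp_apply) blast
qed

fun poly :: "pt list \<Rightarrow> real \<Rightarrow> pt" where
  "poly [] = linepath 0 0"
| "poly [p] = linepath p p"
| "poly (p # q # rest) = linepath p q +++ poly (q # rest)"

lemma poly_start: "l \<noteq> [] \<Longrightarrow> pathstart (poly l) = hd l"
  by (induction l rule: poly.induct) auto

lemma poly_finish: "l \<noteq> [] \<Longrightarrow> pathfinish (poly l) = last l"
  by (induction l rule: poly.induct) auto

lemma poly_path: "path (poly l)"
proof (induction l rule: poly.induct)
  case (3 p q rest)
  then show ?case by (auto intro!: path_join_imp simp: poly_start)
qed (simp_all add: path_const)

lemma poly_image_convex: "l \<noteq> [] \<Longrightarrow> convex P \<Longrightarrow> set l \<subseteq> P \<Longrightarrow> path_image (poly l) \<subseteq> P"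
proof (induction l rule: poly.induct)
  case (3 p q rest)
  have "closed_segment p q \<subseteq> P" using 3 by (intro closed_segment_subset) auto
  moreover have "path_image (poly (q # rest)) \<subseteq> P" using 3 by auto
  ultimately show ?case using path_image_join_subset[of "linepath p q" "poly (q # rest)"] by auto
qed auto

lemma poly_near: "l \<noteq> [] \<Longrightarrow> 0 \<le> L \<Longrightarrow> steps L l \<Longrightarrow> z \<in> path_image (poly l) \<Longrightarrow> \<exists>v\<in>set l. dist z v \<le> L"
proof (induction l rule: poly.induct)
  case 1
  then show ?case by simp
next
  case (2 p)
  then show ?case by simp
next
  case (3 p q rest)
  from 3(5) path_image_join_subset[of "linepath p q" "poly (q # rest)"]
  have "z \<in> closed_segment p q \<or> z \<in> path_image (poly (q # rest))" by auto
  then show ?case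
  proof
    assume "z \<in> closed_segment p q"
    then have "dist z p \<le> dist p q" using dist_in_closed_segment by blast
    then show ?thesis using 3(4) by auto
  next
    assume "z \<in> path_image (poly (q # rest))"
    then show ?thesis using 3 by auto
  qed
qed

lemma cvx_le: fixes x e :: pt shows "convex {z. (z - x) \<bullet> e \<le> c}"
proof -
  have h: "(z - x) \<bullet> e = e \<bullet> z - e \<bullet> x" for z by (metis inner_commute inner_diff_right)
  have "{z. (z - x) \<bullet> e \<le> c} = {z. e \<bullet> z \<le> c + e \<bullet> x}" unfolding h by auto
  then show ?thesis using convex_halfspace_le by simp
qed

lemma cvx_ge: fixes x e :: pt shows "convex {z. (z - x) \<bullet> e \<ge> c}"
proof -
  have h: "(z - x) \<bullet> e = e \<bullet> z - e \<bullet> x" for z by (metis inner_commute inner_diff_right)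
  have "{z. (z - x) \<bullet> e \<ge> c} = {z. e \<bullet> z \<ge> c + e \<bullet> x}" unfolding h by auto
  then show ?thesis using convex_halfspace_ge by simp
qed

lemma cvx_abs: fixes x e :: pt shows "convex {z. \<bar>(z - x) \<bullet> e\<bar> \<le> c}"
proof -
  have "{z. \<bar>(z - x) \<bullet> e\<bar> \<le> c} = {z. (z - x) \<bullet> e \<le> c} \<inter> {z. (z - x) \<bullet> e \<ge> - c}" by auto
  then show ?thesis using cvx_le cvx_ge convex_Int by metis
qed

definition Tm :: "pt \<Rightarrow> pt \<Rightarrow> pt \<Rightarrow> pt" where
  "Tm x \<nu> z = (\<chi> i. if i = 1 then (z - x) \<bullet> rot \<nu> else (z - x) \<bullet> \<nu>)"

lemma Tm_comp [simp]: "Tm x \<nu> z $ 1 = (z - x) \<bullet> rot \<nu>" "Tm x \<nu> z $ 2 = (z - x) \<bullet> \<nu>"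
  by (simp_all add: Tm_def)

lemma Tm_cont: "continuous_on UNIV (Tm x \<nu>)"
  unfolding Tm_def
proof (intro continuous_on_vec_lambda)
  fix i :: 2
  show "continuous_on UNIV (\<lambda>z. if i = 1 then (z - x) \<bullet> rot \<nu> else (z - x) \<bullet> \<nu>)"
    by (cases "i = 1") (simp_all add: continuous_intros)
qed

lemma Tm_inj: assumes "norm \<nu> = 1" "Tm x \<nu> a = Tm x \<nu> b" shows "a = b"
proof -
  have "(a - x) \<bullet> rot \<nu> = (b - x) \<bullet> rot \<nu>" "(a - x) \<bullet> \<nu> = (b - x) \<bullet> \<nu>"
    using assms(2) by (metis Tm_comp)+
  then have "a - x = b - x" using decomp[OF assms(1), of "a - x"] decomp[OF assms(1), of "b - x"] by simp
  then show ?thesis by simp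
qed

lemma crossing:
  fixes x \<nu> :: pt and r :: real
  defines "Box \<equiv> {z. \<bar>(z - x) \<bullet> rot \<nu>\<bar> \<le> 4*r \<and> \<bar>(z - x) \<bullet> \<nu>\<bar> \<le> r}"
  assumes nu: "norm \<nu> = 1"
    and f: "path f" "(pathstart f - x) \<bullet> rot \<nu> = -4*r" "(pathfinish f - x) \<bullet> rot \<nu> = 4*r" "path_image f \<subseteq> Box"
    and g: "path g" "(pathstart g - x) \<bullet> \<nu> = -r" "(pathfinish g - x) \<bullet> \<nu> = r" "path_image g \<subseteq> Box"
  shows "path_image f \<inter> path_image g \<noteq> {}"
proof -
  define a :: pt where "a = (\<chi> i. if i = 1 then -4*r else -r)"
  define b :: pt where "b = (\<chi> i. if i = 1 then 4*r else r)"
  have TB: "Tm x \<nu> ` Box \<subseteq> cbox a b"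
    unfolding Box_def a_def b_def by (auto simp: mem_box_cart forall_2 abs_le_iff)
  have pf: "path (Tm x \<nu> \<circ> f)" "path (Tm x \<nu> \<circ> g)"
    using f(1) g(1) Tm_cont by (auto intro: path_continuous_image continuous_on_subset)
  have if_: "path_image (Tm x \<nu> \<circ> f) \<subseteq> cbox a b" "path_image (Tm x \<nu> \<circ> g) \<subseteq> cbox a b"
    using TB f(4) g(4) by (auto simp: path_image_compose)
  obtain z where z: "z \<in> path_image (Tm x \<nu> \<circ> f)" "z \<in> path_image (Tm x \<nu> \<circ> g)"
  proof (rule fashoda[OF pf if_])
    show "pathstart (Tm x \<nu> \<circ> f) $ 1 = a $ 1" using f(2) by (simp add: pathstart_compose a_def)
    show "pathfinish (Tm x \<nu> \<circ> f) $ 1 = b $ 1" using f(3) by (simp add: pathfinish_compose b_def)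
    show "pathstart (Tm x \<nu> \<circ> g) $ 2 = a $ 2" using g(2) by (simp add: pathstart_compose a_def)
    show "pathfinish (Tm x \<nu> \<circ> g) $ 2 = b $ 2" using g(3) by (simp add: pathfinish_compose b_def)
  qed
  then obtain p q where "p \<in> path_image f" "q \<in> path_image g" "Tm x \<nu> p = Tm x \<nu> q"
    by (auto simp: path_image_compose)
  then show ?thesis using Tm_inj[OF nu] by blast
qed

lemma iter_hd_last:
  assumes "l0 \<noteq> []"
  shows "(refine m ^^ k) l0 \<noteq> [] \<and> hd ((refine m ^^ k) l0) = hd l0 \<and> last ((refine m ^^ k) l0) = last l0"
  by (induction k) (use assms in \<open>auto simp: refine_ne refine_hd refine_last\<close>)

lemma cvx_gt: fixes x e :: pt shows "convex {z. (z - x) \<bullet> e > c}"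
proof -
  have h: "(z - x) \<bullet> e = e \<bullet> z - e \<bullet> x" for z by (metis inner_commute inner_diff_right)
  have "{z. (z - x) \<bullet> e > c} = {z. e \<bullet> z > c + e \<bullet> x}" unfolding h by auto
  then show ?thesis using convex_halfspace_gt by simp
qed

lemma cvx_lt: fixes x e :: pt shows "convex {z. (z - x) \<bullet> e < c}"
proof -
  have h: "(z - x) \<bullet> e = e \<bullet> z - e \<bullet> x" for z by (metis inner_commute inner_diff_right)
  have "{z. (z - x) \<bullet> e < c} = {z. e \<bullet> z < c + e \<bullet> x}" unfolding h by auto
  then show ?thesis using convex_halfspace_lt by simp
qed

lemma orth_facts: assumes "norm \<nu> = 1"
  shows "rot \<nu> \<bullet> rot \<nu> = 1" "\<nu> \<bullet> \<nu> = 1" "\<nu> \<bullet> rot \<nu> = 0" "rot \<nu> \<bullet> \<nu> = 0"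
  using rot_norm[OF assms] assms rot_orth by (simp_all add: norm_eq_1)

lemma inner_le_dist: "norm (e::pt) = 1 \<Longrightarrow> \<bar>(a - b) \<bullet> e\<bar> \<le> dist a b"
  using Cauchy_Schwarz_ineq2[of "a - b" e] by (simp add: dist_norm)

lemma main_sep:
  assumes KO: "K \<subseteq> \<Omega>" "closedin (top_of_set \<Omega>) K" and cor: "coral K"
    and B: "ball x0 r0 \<subseteq> \<Omega>" "r0 > 0"
    and hyp: "hypo K x0 r0 \<epsilon>" and eps: "0 < \<epsilon>" "\<epsilon> \<le> 1/1000"
    and x: "x \<in> K" "x \<in> ball x0 (r0/20)" and r: "0 < r" "r \<le> r0/20"
  shows "sep_ext K x r (K \<inter> ball x r)"
proof -
  obtain F where F: "closed F" "K = \<Omega> \<inter> F" using KO(2) closedin_closed by blast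
  have dxx0: "dist x0 x < r0/20" using x(2) by simp
  have xb: "x \<in> ball x0 (r0/2)" using dxx0 B by simp
  have eps100: "\<epsilon> \<le> 1/100" using eps by simp
  have er: "\<epsilon> * r \<le> r / 1000" using eps r by (simp add: mult_right_mono)
  have r1: "r \<le> r0/2" using r B by simp
  have E40: "40 * \<epsilon> * r \<le> r/25" and E8: "8 * \<epsilon> * r \<le> r/125"
  proof -
    have "40 * \<epsilon> * r = 40 * (\<epsilon> * r)" "8 * \<epsilon> * r = 8 * (\<epsilon> * r)" by simp_all
    then show "40 * \<epsilon> * r \<le> r/25" "8 * \<epsilon> * r \<le> r/125" using er by linarith+
  qed
  obtain \<nu>1 where nu1: "norm \<nu>1 = 1" and mn1: "min_normal K x r \<nu>1" and b1: "beta K x r \<le> \<epsilon>"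
    and h1: "\<forall>z\<in>K \<inter> ball x r. \<bar>(z - x) \<bullet> \<nu>1\<bar> \<le> beta K x r * r"
    and bil1: "\<forall>t0. \<bar>t0\<bar> \<le> r/4 \<longrightarrow> (\<exists>z\<in>K. dist z (x + t0 *\<^sub>R rot \<nu>1) \<le> 5 * \<epsilon> * r)"
    by (rule frame[OF hyp x(1) xb r(1) r1 eps(1) eps100])
  have r8: "0 < 8*r" "8*r \<le> r0/2" using r by auto
  obtain \<nu>2' where nu2': "norm \<nu>2' = 1" and "min_normal K x (8*r) \<nu>2'" and b2: "beta K x (8*r) \<le> \<epsilon>"
    and h2': "\<forall>z\<in>K \<inter> ball x (8*r). \<bar>(z - x) \<bullet> \<nu>2'\<bar> \<le> beta K x (8*r) * (8*r)"
    and bil2': "\<forall>t0. \<bar>t0\<bar> \<le> (8*r)/4 \<longrightarrow> (\<exists>z\<in>K. dist z (x + t0 *\<^sub>R rot \<nu>2') \<le> 5 * \<epsilon> * (8*r))"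
    by (rule frame[OF hyp x(1) xb r8 eps(1) eps100])
  have "beta K x (8*r) * (8*r) \<le> \<epsilon> * (8*r)" using b2 r by (intro mult_right_mono) auto
  then have bb: "beta K x (8*r) * (8*r) \<le> 8 * \<epsilon> * r" by simp
  have h2'': "\<forall>z\<in>K \<inter> ball x (8*r). \<bar>(z - x) \<bullet> \<nu>2'\<bar> \<le> 8 * \<epsilon> * r"
  proof
    fix z assume "z \<in> K \<inter> ball x (8*r)"
    then have "\<bar>(z - x) \<bullet> \<nu>2'\<bar> \<le> beta K x (8*r) * (8*r)" using h2' by blast
    then show "\<bar>(z - x) \<bullet> \<nu>2'\<bar> \<le> 8 * \<epsilon> * r" using bb by linarith
  qed
  obtain z1 where z1: "z1 \<in> K" "dist z1 (x + (r/4) *\<^sub>R rot \<nu>1) \<le> 5 * \<epsilon> * r" using bil1[rule_format, of "r/4"] r by auto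
  have dx1: "dist x (x + (r/4) *\<^sub>R rot \<nu>1) = r/4" using rot_norm[OF nu1] r by (simp add: dist_norm)
  have "dist x z1 \<le> r/4 + 5 * \<epsilon> * r" using dist_triangle[of x z1 "x + (r/4) *\<^sub>R rot \<nu>1"] dx1 z1(2)
    by (simp add: dist_commute)
  then have "dist x z1 < 8*r" using er r by linarith
  then have "z1 \<in> ball x (8*r)" by simp
  then have hz1: "\<bar>(z1 - x) \<bullet> \<nu>2'\<bar> \<le> 8 * \<epsilon> * r" using h2'' z1(1) by blast
  have "(z1 - x) \<bullet> \<nu>2' = (r/4) * (rot \<nu>1 \<bullet> \<nu>2') + (z1 - (x + (r/4) *\<^sub>R rot \<nu>1)) \<bullet> \<nu>2'"
    by (simp add: inner_diff_left inner_add_left)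
  moreover have "\<bar>(z1 - (x + (r/4) *\<^sub>R rot \<nu>1)) \<bullet> \<nu>2'\<bar> \<le> 5 * \<epsilon> * r"
    using inner_le_dist[OF nu2'] z1(2) order_trans by blast
  ultimately have "\<bar>(r/4) * (rot \<nu>1 \<bullet> \<nu>2')\<bar> \<le> 13 * \<epsilon> * r" using hz1 by linarith
  then have "(r/4) * \<bar>rot \<nu>1 \<bullet> \<nu>2'\<bar> \<le> (r/4) * (52 * \<epsilon>)" using r by (simp add: abs_mult)
  then have ang: "\<bar>rot \<nu>1 \<bullet> \<nu>2'\<bar> \<le> 52 * \<epsilon>" using r by (simp add: mult_le_cancel_left_pos)
  have "(norm ((\<nu>2' \<bullet> rot \<nu>1) *\<^sub>R rot \<nu>1 + (\<nu>2' \<bullet> \<nu>1) *\<^sub>R \<nu>1))\<^sup>2 = (\<nu>2' \<bullet> rot \<nu>1)\<^sup>2 + (\<nu>2' \<bullet> \<nu>1)\<^sup>2"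
    by (rule norm_comb2[OF nu1])
  then have sq: "1 = (\<nu>2' \<bullet> rot \<nu>1)\<^sup>2 + (\<nu>2' \<bullet> \<nu>1)\<^sup>2" using decomp[OF nu1, of \<nu>2'] nu2' by simp
  have "\<bar>\<nu>2' \<bullet> rot \<nu>1\<bar> \<le> 52/1000" using ang eps by (simp add: inner_commute)
  then have "(\<nu>2' \<bullet> rot \<nu>1)\<^sup>2 \<le> (52/1000)\<^sup>2" by (metis abs_le_square_iff abs_of_nonneg abs_abs zero_le_divide_iff zero_le_numeral abs_le_self_iff)
  then have "(1/2)\<^sup>2 \<le> (\<nu>2' \<bullet> \<nu>1)\<^sup>2" using sq by (simp add: power2_eq_square)
  then have c12': "1/2 \<le> \<bar>\<nu>2' \<bullet> \<nu>1\<bar>" using abs_le_square_iff[of "1/2" "\<nu>2' \<bullet> \<nu>1"] by simp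
  define \<nu>2 where "\<nu>2 = (if \<nu>2' \<bullet> \<nu>1 \<ge> 0 then \<nu>2' else - \<nu>2')"
  have nu2: "norm \<nu>2 = 1" using nu2' unfolding \<nu>2_def by simp
  have c12: "1/2 \<le> \<nu>1 \<bullet> \<nu>2" using c12' unfolding \<nu>2_def by (auto simp: inner_commute)
  have c12b: "\<nu>1 \<bullet> \<nu>2 \<le> 1" using Cauchy_Schwarz_ineq2[of \<nu>1 \<nu>2] nu1 nu2 by simp
  have h2: "\<forall>z\<in>K \<inter> ball x (8*r). \<bar>(z - x) \<bullet> \<nu>2\<bar> \<le> 8 * \<epsilon> * r" using h2'' unfolding \<nu>2_def by auto
  have bil2: "\<forall>t0. \<bar>t0\<bar> \<le> 2*r \<longrightarrow> (\<exists>z\<in>K. dist z (x + t0 *\<^sub>R rot \<nu>2) \<le> 40 * \<epsilon> * r)"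
  proof (intro allI impI)
    fix t0 :: real assume t0: "\<bar>t0\<bar> \<le> 2*r"
    show "\<exists>z\<in>K. dist z (x + t0 *\<^sub>R rot \<nu>2) \<le> 40 * \<epsilon> * r"
    proof (cases "\<nu>2' \<bullet> \<nu>1 \<ge> 0")
      case True then show ?thesis using bil2' t0 unfolding \<nu>2_def by (auto simp: mult.assoc)
    next
      case False
      then have "x + t0 *\<^sub>R rot \<nu>2 = x + (- t0) *\<^sub>R rot \<nu>2'" unfolding \<nu>2_def by (simp add: rot_neg)
      then show ?thesis using bil2'[rule_format, of "- t0"] t0 by (auto simp: mult.assoc)
    qed
  qed
  define e2 where "e2 = rot \<nu>2"
  have of2: "e2 \<bullet> e2 = 1" "\<nu>2 \<bullet> \<nu>2 = 1" "\<nu>2 \<bullet> e2 = 0" "e2 \<bullet> \<nu>2 = 0" "norm e2 = 1"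
    using orth_facts[OF nu2] rot_norm[OF nu2] unfolding e2_def by auto
  obtain P0 where P0: "P0 \<in> K" "dist P0 (x + (-2*r) *\<^sub>R e2) \<le> 40 * \<epsilon> * r"
    using bil2[rule_format, of "-2*r"] r unfolding e2_def by auto
  obtain Q0 where Q0: "Q0 \<in> K" "dist Q0 (x + (2*r) *\<^sub>R e2) \<le> 40 * \<epsilon> * r"
    using bil2[rule_format, of "2*r"] r unfolding e2_def by auto
  have "(P0 - x) \<bullet> e2 = -2*r + (P0 - (x + (-2*r) *\<^sub>R e2)) \<bullet> e2" using of2 by (simp add: inner_diff_left inner_add_left)
  moreover have "\<bar>(P0 - (x + (-2*r) *\<^sub>R e2)) \<bullet> e2\<bar> \<le> 40 * \<epsilon> * r" using inner_le_dist[OF of2(5)] P0(2) order_trans by blast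
  ultimately have oP: "(P0 - x) \<bullet> e2 \<le> -2*r + 40 * \<epsilon> * r" by linarith
  have "(Q0 - x) \<bullet> e2 = 2*r + (Q0 - (x + (2*r) *\<^sub>R e2)) \<bullet> e2" using of2 by (simp add: inner_diff_left inner_add_left)
  moreover have "\<bar>(Q0 - (x + (2*r) *\<^sub>R e2)) \<bullet> e2\<bar> \<le> 40 * \<epsilon> * r" using inner_le_dist[OF of2(5)] Q0(2) order_trans by blast
  ultimately have oQ: "(Q0 - x) \<bullet> e2 \<ge> 2*r - 40 * \<epsilon> * r" by linarith
  have dxa: "dist x (x + (-2*r) *\<^sub>R e2) = 2*r" "dist x (x + (2*r) *\<^sub>R e2) = 2*r" using of2(5) r by (simp_all add: dist_norm)
  have dP: "dist x P0 \<le> 2*r + 40 * \<epsilon> * r" using dist_triangle[of x P0 "x + (-2*r) *\<^sub>R e2"] dxa P0(2) by (simp add: dist_commute)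
  have dQ: "dist x Q0 \<le> 2*r + 40 * \<epsilon> * r" using dist_triangle[of x Q0 "x + (2*r) *\<^sub>R e2"] dxa Q0(2) by (simp add: dist_commute)
  define L0 where "L0 = dist P0 Q0"
  have L0: "0 \<le> L0" "L0 \<le> 4*r + 80 * \<epsilon> * r" using dist_triangle[of P0 Q0 x] dP dQ unfolding L0_def by (auto simp: dist_commute)
  define c where "c = 11 * \<epsilon>"
  define mf where "mf p q = (SOME z. z \<in> K \<and> dist z (midpoint p q) \<le> c * dist p q)" for p q
  have mp: "\<forall>p q. p \<in> K \<inter> cball x (3*r) \<and> q \<in> K \<inter> cball x (3*r) \<and> dist p q \<le> L0 \<longrightarrow>
                 mf p q \<in> K \<and> dist (mf p q) (midpoint p q) \<le> c * dist p q"
  proof (intro allI impI)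
    fix p q assume a: "p \<in> K \<inter> cball x (3*r) \<and> q \<in> K \<inter> cball x (3*r) \<and> dist p q \<le> L0"
    have "dist x0 p \<le> dist x0 x + dist x p" by (rule dist_triangle)
    then have "dist x0 p < r0/2" using a dxx0 r by auto
    then have pb: "p \<in> ball x0 (r0/2)" by simp
    have "2 * dist p q \<le> r0/2" using a L0 er r by linarith
    then have "\<exists>z\<in>K. dist z (midpoint p q) \<le> 11 * \<epsilon> * dist p q"
      using midpt[OF hyp _ pb _ _ eps(1) eps100] a by blast
    then have "\<exists>z. z \<in> K \<and> dist z (midpoint p q) \<le> c * dist p q" unfolding c_def by blast
    then show "mf p q \<in> K \<and> dist (mf p q) (midpoint p q) \<le> c * dist p q"
      unfolding mf_def by (rule someI_ex)
  qed
  define \<rho>0 where "\<rho>0 = 2*r + 40 * \<epsilon> * r"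
  define \<theta> where "\<theta> = 1/2 + c"
  have c: "0 \<le> c" "c \<le> 1/6" using eps unfolding c_def by auto
  have cL: "3 * c * L0 \<le> 165 * \<epsilon> * r"
  proof -
    have "3 * c * L0 \<le> 3 * c * (5 * r)" using L0 er c by (intro mult_left_mono) auto
    then show ?thesis unfolding c_def by simp
  qed
  have R: "\<rho>0 + 3*c*L0 \<le> 3*r" using cL er r unfolding \<rho>0_def by (simp only: mult.assoc)
  have l0: "set [P0, Q0] \<subseteq> K \<inter> cball x \<rho>0" "steps L0 [P0, Q0]" using P0 Q0 dP dQ unfolding \<rho>0_def L0_def by auto
  have iter: "set ((refine mf ^^ k) [P0, Q0]) \<subseteq> K \<inter> cball x (3*r) \<and> steps (\<theta>^k * L0) ((refine mf ^^ k) [P0, Q0])" for k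
  proof -
    have i: "set ((refine mf ^^ k) [P0, Q0]) \<subseteq> K \<inter> cball x (\<rho>0 + 3*c*L0*(1 - (1/2+c)^k))
         \<and> steps ((1/2+c)^k * L0) ((refine mf ^^ k) [P0, Q0])"
      by (rule iter_props[OF mp R c L0(1) l0])
    have "0 \<le> (1/2+c)^k" using c by simp
    then have "3*c*L0*(1 - (1/2+c)^k) \<le> 3*c*L0" using c L0 by (simp add: mult_left_le)
    then have "cball x (\<rho>0 + 3*c*L0*(1 - (1/2+c)^k)) \<subseteq> cball x (3*r)" using R by (intro subset_cball) linarith
    then show ?thesis using i unfolding \<theta>_def by blast
  qed
  have ballO: "ball x r \<subseteq> \<Omega>"
  proof
    fix z assume "z \<in> ball x r"
    then have "dist x0 z < r0" using dist_triangle[of x0 z x] dxx0 r by (simp add: dist_commute)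
    then show "z \<in> \<Omega>" using B by auto
  qed
  have cballO: "cball x (3*r) \<subseteq> \<Omega>"
  proof
    fix z assume "z \<in> cball x (3*r)"
    then have "dist x0 z < r0" using dist_triangle[of x0 z x] dxx0 r by (simp add: dist_commute)
    then show "z \<in> \<Omega>" using B by auto
  qed
  define S where "S = ball x r - K \<inter> ball x r"
  have S_eq: "S = ball x r - F" unfolding S_def using F ballO by auto
  have openS: "open S" unfolding S_eq using F(1) by (simp add: open_Diff)
  define ap where "ap = x + (r/2) *\<^sub>R \<nu>1"
  define am where "am = x + (-(r/2)) *\<^sub>R \<nu>1"
  define \<beta>1 where "\<beta>1 = beta K x r"
  have b1r: "\<beta>1 * r \<le> \<epsilon> * r" using b1 r unfolding \<beta>1_def by (intro mult_right_mono) auto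
  have apm: "(ap - x) \<bullet> \<nu>1 = r/2" "(am - x) \<bullet> \<nu>1 = -(r/2)" "dist x ap = r/2" "dist x am = r/2"
    using orth_facts[OF nu1] nu1 r unfolding ap_def am_def by (auto simp: dist_norm)
  have DpS: "Dplus x r \<nu>1 (\<beta>1 * r) \<subseteq> S"
  proof
    fix z assume z: "z \<in> Dplus x r \<nu>1 (\<beta>1 * r)"
    then have zz: "z \<in> ball x r" "(z - x) \<bullet> \<nu>1 > \<beta>1 * r" unfolding Dplus_def by auto
    moreover have "z \<notin> K"
    proof
      assume "z \<in> K"
      then have "\<bar>(z - x) \<bullet> \<nu>1\<bar> \<le> \<beta>1 * r" using h1 zz(1) unfolding \<beta>1_def by blast
      then show False using zz(2) by linarith
    qed
    ultimately show "z \<in> S" unfolding S_def by auto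
  qed
  have DmS: "Dminus x r \<nu>1 (\<beta>1 * r) \<subseteq> S"
  proof
    fix z assume z: "z \<in> Dminus x r \<nu>1 (\<beta>1 * r)"
    then have zz: "z \<in> ball x r" "- ((z - x) \<bullet> \<nu>1) > \<beta>1 * r" unfolding Dminus_def by auto
    moreover have "z \<notin> K"
    proof
      assume "z \<in> K"
      then have "\<bar>(z - x) \<bullet> \<nu>1\<bar> \<le> \<beta>1 * r" using h1 zz(1) unfolding \<beta>1_def by blast
      then show False using zz(2) by linarith
    qed
    ultimately show "z \<in> S" unfolding S_def by auto
  qed
  have apD: "ap \<in> Dplus x r \<nu>1 (\<beta>1 * r)" unfolding Dplus_def using apm b1r er r by auto
  have amD: "am \<in> Dminus x r \<nu>1 (\<beta>1 * r)" unfolding Dminus_def using apm b1r er r by auto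
  have conDp: "connected (Dplus x r \<nu>1 (\<beta>1 * r))"
  proof -
    have "Dplus x r \<nu>1 (\<beta>1 * r) = ball x r \<inter> {z. (z - x) \<bullet> \<nu>1 > \<beta>1 * r}" unfolding Dplus_def by auto
    then show ?thesis using convex_connected convex_Int[OF convex_ball cvx_gt] by metis
  qed
  have conDm: "connected (Dminus x r \<nu>1 (\<beta>1 * r))"
  proof -
    have "Dminus x r \<nu>1 (\<beta>1 * r) = ball x r \<inter> {z. (z - x) \<bullet> \<nu>1 < - (\<beta>1 * r)}" unfolding Dminus_def by auto
    then show ?thesis using convex_connected convex_Int[OF convex_ball cvx_lt] by metis
  qed
  have key: "am \<notin> connected_component_set S ap"
  proof
    assume "am \<in> connected_component_set S ap"
    then have "path_component S ap am" using open_path_connected_component[OF openS] by simp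
    then obtain g where g: "path g" "path_image g \<subseteq> S" "pathstart g = ap" "pathfinish g = am"
      unfolding path_component_def by blast
    have KC: "closed (K \<inter> cball x (3*r))"
    proof -
      have "K \<inter> cball x (3*r) = F \<inter> cball x (3*r)" using F cballO by auto
      then show ?thesis using F(1) by (simp add: closed_Int)
    qed
    have disj: "path_image g \<inter> (K \<inter> cball x (3*r)) = {}" using g(2) unfolding S_def by auto
    obtain \<delta> where \<delta>: "\<delta> > 0" "\<forall>p\<in>path_image g. \<forall>q\<in>K \<inter> cball x (3*r). \<delta> \<le> dist p q"
      using separate_compact_closed[OF compact_path_image[OF g(1)] KC disj] by blast
    have th1: "\<theta> < 1" "0 \<le> \<theta>" using c eps unfolding \<theta>_def by auto
    obtain k where k: "\<theta>^k < \<delta> / (L0 + 1)" using real_arch_pow_inv[of "\<delta> / (L0 + 1)" \<theta>] \<delta> L0 th1 by auto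
    define Lk where "Lk = \<theta>^k * L0"
    have "\<theta>^k * L0 \<le> \<theta>^k * (L0 + 1)" using th1 by (intro mult_left_mono) auto
    also have "\<dots> < \<delta>" using k L0 by (simp add: field_simps)
    finally have Lk: "Lk < \<delta>" "0 \<le> Lk" unfolding Lk_def using th1 L0 by auto
    define l where "l = (refine mf ^^ k) [P0, Q0]"
    have l: "set l \<subseteq> K \<inter> cball x (3*r)" "steps Lk l" using iter[of k] unfolding l_def Lk_def by auto
    have lhl: "l \<noteq> []" "hd l = P0" "last l = Q0" using iter_hd_last[of "[P0, Q0]" k mf] unfolding l_def by auto
    define A where "A = P0 - ((P0 - x) \<bullet> e2 + 4*r) *\<^sub>R e2"
    define Bq where "Bq = Q0 + (4*r - (Q0 - x) \<bullet> e2) *\<^sub>R e2"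
    define f where "f = linepath A P0 +++ poly l +++ linepath Q0 Bq"
    define lam where "lam = r - (r/2) * (\<nu>1 \<bullet> \<nu>2)"
    define Bt where "Bt = am - lam *\<^sub>R \<nu>2"
    define Tp where "Tp = ap + lam *\<^sub>R \<nu>2"
    define g' where "g' = linepath Bt am +++ reversepath g +++ linepath ap Tp"
    define Box where "Box = {z. \<bar>(z - x) \<bullet> rot \<nu>2\<bar> \<le> 4*r \<and> \<bar>(z - x) \<bullet> \<nu>2\<bar> \<le> r}"
    have cvB: "convex Box"
    proof -
      have "Box = {z. \<bar>(z - x) \<bullet> rot \<nu>2\<bar> \<le> 4*r} \<inter> {z. \<bar>(z - x) \<bullet> \<nu>2\<bar> \<le> r}" unfolding Box_def by auto
      then show ?thesis using convex_Int cvx_abs by metis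
    qed
    have e2r: "rot \<nu>2 = e2" unfolding e2_def ..
    have Ac: "(A - x) \<bullet> e2 = -4*r" "(A - x) \<bullet> \<nu>2 = (P0 - x) \<bullet> \<nu>2"
      unfolding A_def using of2 by (simp_all add: inner_diff_left algebra_simps)
    have Bc: "(Bq - x) \<bullet> e2 = 4*r" "(Bq - x) \<bullet> \<nu>2 = (Q0 - x) \<bullet> \<nu>2"
      unfolding Bq_def using of2 by (simp_all add: inner_diff_left inner_add_left algebra_simps)
    have "dist x P0 < 8*r" "dist x Q0 < 8*r" using dP dQ E40 r by linarith+
    then have P08: "P0 \<in> K \<inter> ball x (8*r)" "Q0 \<in> K \<inter> ball x (8*r)" using P0 Q0 by auto
    have hP: "\<bar>(P0 - x) \<bullet> \<nu>2\<bar> \<le> 8 * \<epsilon> * r" "\<bar>(Q0 - x) \<bullet> \<nu>2\<bar> \<le> 8 * \<epsilon> * r" using h2 P08 by auto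
    have oPQ: "\<bar>(P0 - x) \<bullet> e2\<bar> \<le> 3*r" "\<bar>(Q0 - x) \<bullet> e2\<bar> \<le> 3*r"
      using inner_le_dist[OF of2(5), of P0 x] inner_le_dist[OF of2(5), of Q0 x] dP dQ E40 r
      unfolding dist_commute[of P0 x] dist_commute[of Q0 x] by linarith+
    have c1e: "\<bar>\<nu>1 \<bullet> e2\<bar> \<le> 1" using Cauchy_Schwarz_ineq2[of \<nu>1 e2] nu1 of2(5) by simp
    have apc: "(ap - x) \<bullet> \<nu>2 = (r/2) * (\<nu>1 \<bullet> \<nu>2)" "(ap - x) \<bullet> e2 = (r/2) * (\<nu>1 \<bullet> e2)"
      unfolding ap_def by simp_all
    have amc: "(am - x) \<bullet> \<nu>2 = - (r/2) * (\<nu>1 \<bullet> \<nu>2)" "(am - x) \<bullet> e2 = - (r/2) * (\<nu>1 \<bullet> e2)"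
      unfolding am_def by simp_all
    have Btc: "(Bt - x) \<bullet> \<nu>2 = -r" "(Bt - x) \<bullet> e2 = - (r/2) * (\<nu>1 \<bullet> e2)"
      unfolding Bt_def lam_def am_def using of2 by (simp_all add: inner_diff_left inner_add_left algebra_simps)
    have Tpc: "(Tp - x) \<bullet> \<nu>2 = r" "(Tp - x) \<bullet> e2 = (r/2) * (\<nu>1 \<bullet> e2)"
      unfolding Tp_def lam_def ap_def using of2 by (simp_all add: inner_diff_left inner_add_left algebra_simps)
    have pl: "path (poly l)" "pathstart (poly l) = P0" "pathfinish (poly l) = Q0"
      using poly_path poly_start[OF lhl(1)] poly_finish[OF lhl(1)] lhl by auto
    have fp: "path f" "pathstart f = A" "pathfinish f = Bq"
      unfolding f_def using pl by (auto intro!: path_join_imp)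
    have fimg: "path_image f = closed_segment A P0 \<union> path_image (poly l) \<union> closed_segment Q0 Bq"
      unfolding f_def using pl by (simp add: path_image_join Un_assoc)
    have gp: "path g'" "pathstart g' = Bt" "pathfinish g' = Tp"
      unfolding g'_def using g by (auto intro!: path_join_imp)
    have gimg: "path_image g' = closed_segment Bt am \<union> path_image g \<union> closed_segment ap Tp"
      unfolding g'_def using g by (simp add: path_image_join Un_assoc)
    have E8': "8 * \<epsilon> * r \<le> r" using E8 r by linarith
    have SA: "closed_segment A P0 \<subseteq> Box \<inter> {z. (z - x) \<bullet> e2 \<le> -2*r + 40 * \<epsilon> * r}"
    proof (rule closed_segment_subset)
      show "convex (Box \<inter> {z. (z - x) \<bullet> e2 \<le> -2*r + 40 * \<epsilon> * r})" using cvB cvx_le by (rule convex_Int)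
      show "A \<in> Box \<inter> {z. (z - x) \<bullet> e2 \<le> -2*r + 40 * \<epsilon> * r}"
        using Ac hP E8' E40 r by (simp only: Box_def e2r Int_iff mem_Collect_eq abs_le_iff) (safe; linarith)
      show "P0 \<in> Box \<inter> {z. (z - x) \<bullet> e2 \<le> -2*r + 40 * \<epsilon> * r}"
        using oPQ hP E8' oP r by (simp only: Box_def e2r Int_iff mem_Collect_eq abs_le_iff) (safe; linarith)
    qed
    have SB: "closed_segment Q0 Bq \<subseteq> Box \<inter> {z. (z - x) \<bullet> e2 \<ge> 2*r - 40 * \<epsilon> * r}"
    proof (rule closed_segment_subset)
      show "convex (Box \<inter> {z. (z - x) \<bullet> e2 \<ge> 2*r - 40 * \<epsilon> * r})" using cvB cvx_ge by (rule convex_Int)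
      show "Bq \<in> Box \<inter> {z. (z - x) \<bullet> e2 \<ge> 2*r - 40 * \<epsilon> * r}"
        using Bc hP E8' E40 r by (simp only: Box_def e2r Int_iff mem_Collect_eq abs_le_iff) (safe; linarith)
      show "Q0 \<in> Box \<inter> {z. (z - x) \<bullet> e2 \<ge> 2*r - 40 * \<epsilon> * r}"
        using oPQ hP E8' oQ r by (simp only: Box_def e2r Int_iff mem_Collect_eq abs_le_iff) (safe; linarith)
    qed
    have SP: "path_image (poly l) \<subseteq> Box \<inter> {z. \<bar>(z - x) \<bullet> \<nu>2\<bar> \<le> 8 * \<epsilon> * r}"
    proof (rule poly_image_convex[OF lhl(1)])
      show "convex (Box \<inter> {z. \<bar>(z - x) \<bullet> \<nu>2\<bar> \<le> 8 * \<epsilon> * r})" using cvB cvx_abs by (rule convex_Int)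
      show "set l \<subseteq> Box \<inter> {z. \<bar>(z - x) \<bullet> \<nu>2\<bar> \<le> 8 * \<epsilon> * r}"
      proof
        fix v assume v: "v \<in> set l"
        then have vK: "v \<in> K" "dist x v \<le> 3*r" using l(1) by auto
        then have "dist x v < 8*r" using r by linarith
        then have hv: "\<bar>(v - x) \<bullet> \<nu>2\<bar> \<le> 8 * \<epsilon> * r" using h2 vK by auto
        have "\<bar>(v - x) \<bullet> e2\<bar> \<le> 3*r" using inner_le_dist[OF of2(5), of v x] vK by (simp add: dist_commute)
        then show "v \<in> Box \<inter> {z. \<bar>(z - x) \<bullet> \<nu>2\<bar> \<le> 8 * \<epsilon> * r}"
          using hv E8' r by (simp only: Box_def e2r Int_iff mem_Collect_eq abs_le_iff) (safe; linarith)
      qed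
    qed
    have ne1: "\<bar>(r/2) * (\<nu>1 \<bullet> e2)\<bar> \<le> r/2" using c1e r by (simp add: abs_mult mult_left_le)
    have hh: "(r/2) * (\<nu>1 \<bullet> \<nu>2) \<ge> r/4" "(r/2) * (\<nu>1 \<bullet> \<nu>2) \<le> r/2"
      using c12 c12b r by (simp_all add: mult_left_le) 
    have S1: "closed_segment Bt am \<subseteq> Box \<inter> {z. (z - x) \<bullet> \<nu>2 \<le> - (r/4)} \<inter> {z. \<bar>(z - x) \<bullet> e2\<bar> \<le> r/2}"
    proof (rule closed_segment_subset)
      show "convex (Box \<inter> {z. (z - x) \<bullet> \<nu>2 \<le> - (r/4)} \<inter> {z. \<bar>(z - x) \<bullet> e2\<bar> \<le> r/2})"
        using cvB cvx_le cvx_abs by (intro convex_Int) 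
      show "Bt \<in> Box \<inter> {z. (z - x) \<bullet> \<nu>2 \<le> - (r/4)} \<inter> {z. \<bar>(z - x) \<bullet> e2\<bar> \<le> r/2}"
        using Btc ne1 r by (simp only: Box_def e2r Int_iff mem_Collect_eq abs_le_iff) (safe; linarith)
      show "am \<in> Box \<inter> {z. (z - x) \<bullet> \<nu>2 \<le> - (r/4)} \<inter> {z. \<bar>(z - x) \<bullet> e2\<bar> \<le> r/2}"
        using amc ne1 hh r by (simp only: Box_def e2r Int_iff mem_Collect_eq abs_le_iff) (safe; linarith)
    qed
    have S2: "closed_segment ap Tp \<subseteq> Box \<inter> {z. (z - x) \<bullet> \<nu>2 \<ge> r/4} \<inter> {z. \<bar>(z - x) \<bullet> e2\<bar> \<le> r/2}"
    proof (rule closed_segment_subset)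
      show "convex (Box \<inter> {z. (z - x) \<bullet> \<nu>2 \<ge> r/4} \<inter> {z. \<bar>(z - x) \<bullet> e2\<bar> \<le> r/2})"
        using cvB cvx_ge cvx_abs by (intro convex_Int)
      show "Tp \<in> Box \<inter> {z. (z - x) \<bullet> \<nu>2 \<ge> r/4} \<inter> {z. \<bar>(z - x) \<bullet> e2\<bar> \<le> r/2}"
        using Tpc ne1 r by (simp only: Box_def e2r Int_iff mem_Collect_eq abs_le_iff) (safe; linarith)
      show "ap \<in> Box \<inter> {z. (z - x) \<bullet> \<nu>2 \<ge> r/4} \<inter> {z. \<bar>(z - x) \<bullet> e2\<bar> \<le> r/2}"
        using apc ne1 hh r by (simp only: Box_def e2r Int_iff mem_Collect_eq abs_le_iff) (safe; linarith)
    qed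
    have SG: "path_image g \<subseteq> Box \<inter> {z. \<bar>(z - x) \<bullet> e2\<bar> < r}"
    proof
      fix z assume "z \<in> path_image g"
      then have "dist x z < r" using g(2) unfolding S_def by auto
      moreover have "\<bar>(z - x) \<bullet> e2\<bar> \<le> dist x z" "\<bar>(z - x) \<bullet> \<nu>2\<bar> \<le> dist x z"
        using inner_le_dist[OF of2(5), of z x] inner_le_dist[OF nu2, of z x] by (simp_all add: dist_commute)
      ultimately show "z \<in> Box \<inter> {z. \<bar>(z - x) \<bullet> e2\<bar> < r}" unfolding Box_def e2r using r by auto
    qed
    have fB: "path_image f \<subseteq> Box" using fimg SA SB SP by auto
    have gB: "path_image g' \<subseteq> Box" using gimg S1 S2 SG by auto
    have "path_image f \<inter> path_image g' \<noteq> {}"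
      by (rule crossing[OF nu2 fp(1) _ _ _ gp(1)]) (use fp gp Ac Bc Btc Tpc fB gB in \<open>simp_all add: e2r Box_def\<close>)
    then obtain w where w: "w \<in> path_image f" "w \<in> path_image g'" by blast
    have "\<bar>(w - x) \<bullet> e2\<bar> \<le> r/2 \<or> \<bar>(w - x) \<bullet> e2\<bar> < r" using w(2) gimg S1 S2 SG by blast
    then have wo: "\<bar>(w - x) \<bullet> e2\<bar> < r" using r by linarith
    have "w \<notin> closed_segment A P0"
    proof
      assume "w \<in> closed_segment A P0"
      then have "(w - x) \<bullet> e2 \<le> -2*r + 40 * \<epsilon> * r" using SA by blast
      then show False using wo E40 r unfolding abs_less_iff by linarith
    qed
    moreover have "w \<notin> closed_segment Q0 Bq"
    proof
      assume "w \<in> closed_segment Q0 Bq"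
      then have "(w - x) \<bullet> e2 \<ge> 2*r - 40 * \<epsilon> * r" using SB by blast
      then show False using wo E40 r unfolding abs_less_iff by linarith
    qed
    ultimately have wp: "w \<in> path_image (poly l)" using w(1) fimg by auto
    then have wh: "\<bar>(w - x) \<bullet> \<nu>2\<bar> \<le> 8 * \<epsilon> * r" using SP by auto
    have "w \<notin> closed_segment Bt am"
    proof
      assume "w \<in> closed_segment Bt am"
      then have "(w - x) \<bullet> \<nu>2 \<le> - (r/4)" using S1 by blast
      then show False using wh E8 r unfolding abs_le_iff by linarith
    qed
    moreover have "w \<notin> closed_segment ap Tp"
    proof
      assume "w \<in> closed_segment ap Tp"
      then have "(w - x) \<bullet> \<nu>2 \<ge> r/4" using S2 by blast
      then show False using wh E8 r unfolding abs_le_iff by linarith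
    qed
    ultimately have wg: "w \<in> path_image g" using w(2) gimg by auto
    obtain v where v: "v \<in> set l" "dist w v \<le> Lk" using poly_near[OF lhl(1) Lk(2) l(2) wp] by blast
    have "\<delta> \<le> dist w v" using \<delta>(2) wg v(1) l(1) by blast
    then show False using v(2) Lk(1) by linarith
  qed
  have apS: "ap \<in> S" and amS: "am \<in> S" using apD amD DpS DmS by auto
  define C1 where "C1 = connected_component_set S ap"
  define C2 where "C2 = connected_component_set S am"
  have C: "C1 \<in> components S" "C2 \<in> components S" unfolding C1_def C2_def using apS amS by (auto intro: componentsI)
  have "am \<in> C2" unfolding C2_def using amS by simp
  then have C12: "C1 \<noteq> C2" using key unfolding C1_def by blast
  have D1: "Dplus x r \<nu>1 (\<beta>1 * r) \<subseteq> C1" unfolding C1_def by (rule connected_component_maximal[OF apD conDp DpS])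
  have D2: "Dminus x r \<nu>1 (\<beta>1 * r) \<subseteq> C2" unfolding C2_def by (rule connected_component_maximal[OF amD conDm DmS])
  have bI: "beta (K \<inter> ball x r) x r = beta K x r" by (rule beta_Int)
  have sep: "separates (K \<inter> ball x r) x r"
    unfolding separates_def bI min_normal_Int
  proof (intro conjI exI)
    show "beta K x r \<le> 1/2" using b1 eps by simp
    show "min_normal K x r \<nu>1" by (rule mn1)
    show "C1 \<in> components (ball x r - K \<inter> ball x r)" "C2 \<in> components (ball x r - K \<inter> ball x r)"
      using C unfolding S_def by auto
    show "C1 \<noteq> C2" by (rule C12)
    show "Dplus x r \<nu>1 (beta K x r * r) \<subseteq> C1" "Dminus x r \<nu>1 (beta K x r * r) \<subseteq> C2"
      using D1 D2 unfolding \<beta>1_def by auto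
  qed
  have clo: "closedin (top_of_set (ball x r)) (K \<inter> ball x r)"
  proof -
    have "K \<inter> ball x r = ball x r \<inter> F" using F ballO by auto
    then show ?thesis using closedin_closed_Int[OF F(1)] by simp
  qed
  have corI: "coral (K \<inter> ball x r)"
    unfolding coral_def
  proof (intro ballI allI impI)
    fix z \<rho> assume z: "z \<in> K \<inter> ball x r" and \<rho>: "(0::real) < \<rho>"
    define \<rho>' where "\<rho>' = min \<rho> (r - dist x z)"
    have \<rho>': "0 < \<rho>'" using z \<rho> unfolding \<rho>'_def by auto
    have "K \<inter> ball z \<rho>' \<subseteq> K \<inter> ball x r \<inter> ball z \<rho>"
    proof
      fix w assume w: "w \<in> K \<inter> ball z \<rho>'"
      then have "dist z w < \<rho>'" by simp
      then have "dist x w < r" "dist z w < \<rho>" using dist_triangle[of x w z] unfolding \<rho>'_def by auto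
      then show "w \<in> K \<inter> ball x r \<inter> ball z \<rho>" using w by auto
    qed
    then have "H1 (K \<inter> ball z \<rho>') \<le> H1 (K \<inter> ball x r \<inter> ball z \<rho>)" by (rule H1_mono)
    moreover have "0 < H1 (K \<inter> ball z \<rho>')" using cor z \<rho>' unfolding coral_def by blast
    ultimately show "0 < H1 (K \<inter> ball x r \<inter> ball z \<rho>)" by (rule order.strict_trans2[rotated])
  qed
  show ?thesis unfolding sep_ext_def using sep clo corI bI by auto
qed

lemma tau_facts: "0 < tau" "tau \<le> 1"
proof -
  show "0 < tau" unfolding tau_def by simp
  have "10 powr (-10::real) \<le> 10 powr 0" by (rule powr_mono) auto
  then show "tau \<le> 1" unfolding tau_def by simp
qed

theorem lemma4p11:
  shows "\<exists>\<epsilon>>0. \<forall>(\<Omega>::pt set) C h u K.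
     open \<Omega> \<and> elastic C \<and> gauge_fn h \<and> griffith_amin C \<Omega> h u K \<longrightarrow>
     (\<forall>x0 r0. x0 \<in> K \<and> r0 > 0 \<and> ball x0 r0 \<subseteq> \<Omega> \<and>
        (\<forall>x\<in>K \<inter> ball x0 (r0/2). \<forall>r. 0 < r \<and> r \<le> r0/2 \<longrightarrow>
            ennreal (beta K x r) + eta K x r \<le> ennreal \<epsilon>)
      \<longrightarrow> (\<forall>x\<in>K \<inter> ball x0 (r0/20). \<forall>r. 0 < r \<and> r \<le> r0/20 \<longrightarrow>
            eta K x r = 0 \<and> (\<forall>E. min_sep_ext K x r E \<longrightarrow> mK K E x r = 0)))"
proof -
  define \<epsilon> where "\<epsilon> = tau / 1000"
  have eps: "0 < \<epsilon>" "\<epsilon> \<le> 1/1000" "\<epsilon> \<le> tau" using tau_facts unfolding \<epsilon>_def by auto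
  show ?thesis
  proof (intro exI[of _ \<epsilon>] conjI allI impI)
    show "0 < \<epsilon>" by (rule eps(1))
    fix \<Omega> :: "pt set" and C h u K x0 r0
    assume A: "open \<Omega> \<and> elastic C \<and> gauge_fn h \<and> griffith_amin C \<Omega> h u K"
    assume H: "x0 \<in> K \<and> r0 > 0 \<and> ball x0 r0 \<subseteq> \<Omega> \<and>
        (\<forall>x\<in>K \<inter> ball x0 (r0/2). \<forall>r. 0 < r \<and> r \<le> r0/2 \<longrightarrow>
            ennreal (beta K x r) + eta K x r \<le> ennreal \<epsilon>)"
    have KO: "K \<subseteq> \<Omega>" "closedin (top_of_set \<Omega>) K" "coral K"
      using A unfolding griffith_amin_def admissible_def by auto
    have hyp: "hypo K x0 r0 \<epsilon>" unfolding hypo_def using H by blast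
    show "\<forall>x\<in>K \<inter> ball x0 (r0/20). \<forall>r. 0 < r \<and> r \<le> r0/20 \<longrightarrow>
            eta K x r = 0 \<and> (\<forall>E. min_sep_ext K x r E \<longrightarrow> mK K E x r = 0)"
    proof (intro ballI allI impI)
      fix x r assume x: "x \<in> K \<inter> ball x0 (r0/20)" and r: "0 < r \<and> r \<le> r0/20"
      have se: "sep_ext K x r (K \<inter> ball x r)"
        by (rule main_sep[OF KO(1,2,3) _ _ hyp eps(1,2)]) (use H x r in auto)
      have "(INF E\<in>{E. sep_ext K x r E}. H1 (E - K)) \<le> H1 (K \<inter> ball x r - K)"
        by (rule INF_lower) (use se in simp)
      moreover have "K \<inter> ball x r - K = {}" by auto
      ultimately have I0: "(INF E\<in>{E. sep_ext K x r E}. H1 (E - K)) = 0" by simp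
      have eta0: "eta K x r = 0" unfolding eta_def I0 by simp
      have mK0: "mK K E x r = 0" if mE: "min_sep_ext K x r E" for E
      proof -
        have HE: "H1 (E - K) = 0" using mE I0 unfolding min_sep_ext_def by simp
        have sig: "sigma K E r y = 0" if y: "y \<in> K \<inter> ball x (9/10 * r)" for y
        proof -
          have dy: "dist x0 y < r0/2"
            using dist_triangle[of x0 y x] x y r by (simp add: dist_commute)
          have good: "good_ball K E y t" if t: "0 < t" "t \<le> r/10" for t
          proof -
            have "ennreal (beta K y t) + eta K y t \<le> ennreal \<epsilon>" using hyp y dy t r unfolding hypo_def by auto
            then have "ennreal (beta K y t) \<le> ennreal \<epsilon>" by (rule order_trans[rotated]) (rule add_increasing2; simp)
            then have "beta K y t \<le> \<epsilon>" using eps by simp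
            then have b: "beta K y t \<le> tau" using eps by simp
            have "H1 ((E \<inter> ball y t) - K) \<le> H1 (E - K)" by (rule H1_mono) auto
            then have "H1 ((E \<inter> ball y t) - K) = 0" using HE by simp
            then show ?thesis unfolding good_ball_def using b by simp
          qed
          have "{r'. r' > 0 \<and> (\<forall>t\<in>{r'..r/10}. good_ball K E y t)} = {0<..}"
            using good by auto
          then show ?thesis unfolding sigma_def by simp
        qed
        have "badR K E x r = {}" unfolding badR_def using sig by auto
        then show ?thesis unfolding mK_def by simp
      qed
      show "eta K x r = 0 \<and> (\<forall>E. min_sep_ext K x r E \<longrightarrow> mK K E x r = 0)" using eta0 mK0 by blast
    qed
  qed
qed

end
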